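(* Let $G$ be a regular graph on $n$ vertices with Laplacian $L$, and suppose that $\operatorname{tr}(L^m)<n^m$ for some integer $m\ge 2$. Then $$t(\bar G)\ \ge\ n^{n-2}\left(1-\frac{(\operatorname{tr}(L^m))^{1/m}}{n}\right)\exp\!\left(-\sum_{k=1}^{m-1}\frac{\operatorname{tr}(L^k)-(\operatorname{tr}(L^m))^{k/m}}{k\,n^k}\right).$$ Moreover, the right-hand side converges to $t(\bar G)$ as $m\to\infty$.
   Context: All graphs are finite, simple and undirected. $t(H)$ denotes the number of labeled spanning trees of a graph $H$; $\bar G$ is the complement of $G$. The Laplacian of $G$ is $L=D-A$, where $A$ is the adjacency matrix and $D$ the diagonal matrix of vertex degrees; $\operatorname{tr}$ denotes the trace. *)

theory Defs
  imports "HOL-Analysis.Analysis" "Jordan_Normal_Form.Matrix"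
begin

definition simple_graph :: "nat \<Rightarrow> (nat \<Rightarrow> nat \<Rightarrow> bool) \<Rightarrow> bool" where
  "simple_graph n E \<longleftrightarrow> (\<forall>i<n. \<forall>j<n. E i j \<longleftrightarrow> E j i) \<and> (\<forall>i<n. \<not> E i i)"

definition degree :: "nat \<Rightarrow> (nat \<Rightarrow> nat \<Rightarrow> bool) \<Rightarrow> nat \<Rightarrow> nat" where
  "degree n E i = card {j. j < n \<and> E i j}"

definition regular_graph :: "nat \<Rightarrow> (nat \<Rightarrow> nat \<Rightarrow> bool) \<Rightarrow> bool" where
  "regular_graph n E \<longleftrightarrow> (\<exists>d. \<forall>i<n. degree n E i = d)"

definition complement_graph :: "(nat \<Rightarrow> nat \<Rightarrow> bool) \<Rightarrow> nat \<Rightarrow> nat \<Rightarrow> bool" where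
  "complement_graph E i j \<longleftrightarrow> i \<noteq> j \<and> \<not> E i j"

definition adjacency_mat :: "nat \<Rightarrow> (nat \<Rightarrow> nat \<Rightarrow> bool) \<Rightarrow> real mat" where
  "adjacency_mat n E = mat n n (\<lambda>(i, j). if E i j then 1 else 0)"

definition degree_mat :: "nat \<Rightarrow> (nat \<Rightarrow> nat \<Rightarrow> bool) \<Rightarrow> real mat" where
  "degree_mat n E = mat n n (\<lambda>(i, j). if i = j then real (degree n E i) else 0)"

definition laplacian :: "nat \<Rightarrow> (nat \<Rightarrow> nat \<Rightarrow> bool) \<Rightarrow> real mat" where
  "laplacian n E = degree_mat n E - adjacency_mat n E"

definition mat_trace :: "real mat \<Rightarrow> real" where
  "mat_trace A = (\<Sum>i<dim_row A. A $$ (i, i))"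

definition graph_edges :: "nat \<Rightarrow> (nat \<Rightarrow> nat \<Rightarrow> bool) \<Rightarrow> nat set set" where
  "graph_edges n E = {{i, j} | i j. i < n \<and> j < n \<and> i \<noteq> j \<and> E i j}"

definition edges_connected :: "nat \<Rightarrow> nat set set \<Rightarrow> bool" where
  "edges_connected n T \<longleftrightarrow>
     (\<forall>u<n. \<forall>v<n. (\<lambda>a b. {a, b} \<in> T)\<^sup>*\<^sup>* u v)"

definition spanning_tree :: "nat \<Rightarrow> (nat \<Rightarrow> nat \<Rightarrow> bool) \<Rightarrow> nat set set \<Rightarrow> bool" where
  "spanning_tree n E T \<longleftrightarrow> T \<subseteq> graph_edges n E \<and> edges_connected n T \<and> card T = n - 1"

definition num_spanning_trees :: "nat \<Rightarrow> (nat \<Rightarrow> nat \<Rightarrow> bool) \<Rightarrow> nat" where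
  "num_spanning_trees n E = card {T. spanning_tree n E T}"

definition tree_bound :: "nat \<Rightarrow> (nat \<Rightarrow> nat \<Rightarrow> bool) \<Rightarrow> nat \<Rightarrow> real" where
  "tree_bound n E m =
    (let tr = (\<lambda>k. mat_trace (laplacian n E ^\<^sub>m k)) in
     real n ^ (n - 2) * (1 - tr m powr (1 / real m) / real n) *
     exp (- (\<Sum>k = 1..<m. (tr k - tr m powr (real k / real m)) / (real k * real n ^ k))))"

end

theory Submission
  imports Defs "Jordan_Normal_Form.Schur_Decomposition" "HOL-Library.FuncSet"
begin

definition gtr :: "'a::comm_ring_1 mat \<Rightarrow> 'a" where
  "gtr A = (\<Sum>i<dim_row A. A $$ (i, i))"

lemma gtr_mult_comm:
  assumes A: "A \<in> carrier_mat n m" and B: "B \<in> carrier_mat m n"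
  shows "gtr (A * B) = gtr (B * A)"
proof -
  have "gtr (A * B) = (\<Sum>i<n. \<Sum>j<m. A $$ (i,j) * B $$ (j,i))"
    unfolding gtr_def using A B
    by (auto simp: scalar_prod_def lessThan_atLeast0 intro!: sum.cong)
  also have "\<dots> = (\<Sum>j<m. \<Sum>i<n. B $$ (j,i) * A $$ (i,j))"
    by (subst sum.swap) (simp add: mult.commute)
  also have "\<dots> = gtr (B * A)"
    unfolding gtr_def using A B
    by (auto simp: scalar_prod_def lessThan_atLeast0 intro!: sum.cong)
  finally show ?thesis .
qed

lemma upper_tri_mult:
  assumes A: "A \<in> carrier_mat n n" and B: "B \<in> carrier_mat n n"
    and uA: "upper_triangular A" and uB: "upper_triangular B"
  shows "upper_triangular (A * B) \<and> (\<forall>i<n. (A*B) $$ (i,i) = A $$ (i,i) * B $$ (i,i))"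
proof
  show "upper_triangular (A * B)"
  proof
    fix i j assume ji: "j < i" and i: "i < dim_row (A * B)"
    have "(A*B) $$ (i,j) = (\<Sum>k<n. A $$ (i,k) * B $$ (k,j))"
      using A B i ji by (auto simp: scalar_prod_def lessThan_atLeast0 intro!: sum.cong)
    also have "\<dots> = 0"
    proof (rule sum.neutral, intro ballI)
      fix k assume k: "k \<in> {..<n}"
      show "A $$ (i,k) * B $$ (k,j) = 0"
      proof (cases "k < i")
        case True then show ?thesis using upper_triangularD[OF uA True] A i by auto
      next
        case False then have "j < k" using ji by auto
        then show ?thesis using upper_triangularD[OF uB] B k by auto
      qed
    qed
    finally show "(A*B) $$ (i,j) = 0" .
  qed
next
  show "\<forall>i<n. (A*B) $$ (i,i) = A $$ (i,i) * B $$ (i,i)"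
  proof (intro allI impI)
    fix i assume i: "i < n"
    have "(A*B) $$ (i,i) = (\<Sum>k<n. A $$ (i,k) * B $$ (k,i))"
      using A B i by (auto simp: scalar_prod_def lessThan_atLeast0 intro!: sum.cong)
    also have "\<dots> = A $$ (i,i) * B $$ (i,i) + (\<Sum>k\<in>{..<n}-{i}. A $$ (i,k) * B $$ (k,i))"
      by (rule sum.remove) (use i in auto)
    also have "(\<Sum>k\<in>{..<n}-{i}. A $$ (i,k) * B $$ (k,i)) = 0"
    proof (rule sum.neutral, intro ballI)
      fix k assume k: "k \<in> {..<n}-{i}"
      show "A $$ (i,k) * B $$ (k,i) = 0"
      proof (cases "k < i")
        case True then show ?thesis using upper_triangularD[OF uA True] A i by auto
      next
        case False then have "i < k" using k by auto
        then show ?thesis using upper_triangularD[OF uB] B k by auto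
      qed
    qed
    finally show "(A*B) $$ (i,i) = A $$ (i,i) * B $$ (i,i)" by simp
  qed
qed

lemma upper_tri_pow:
  assumes A: "A \<in> carrier_mat n n" and uA: "upper_triangular A"
  shows "upper_triangular (A ^\<^sub>m k) \<and> (\<forall>i<n. (A ^\<^sub>m k) $$ (i,i) = A $$ (i,i) ^ k)"
proof (induct k)
  case 0
  then show ?case using A by auto
next
  case (Suc k)
  have P: "A ^\<^sub>m k \<in> carrier_mat n n" using A by simp
  from upper_tri_mult[OF P A] Suc uA have
    "upper_triangular (A ^\<^sub>m Suc k)" "\<forall>i<n. (A ^\<^sub>m Suc k) $$ (i,i) = A $$ (i,i) ^ k * A $$ (i,i)"
    by auto
  then show ?case by (metis power_Suc2)
qed

lemma gtr_similar_pow: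
  assumes w: "similar_mat_wit A B P Q" and A: "A \<in> carrier_mat n n"
  shows "gtr (A ^\<^sub>m k) = gtr (B ^\<^sub>m k)"
proof -
  from similar_mat_witD2[OF A w] have B: "B \<in> carrier_mat n n" and P: "P \<in> carrier_mat n n"
    and Q: "Q \<in> carrier_mat n n" and QP: "Q * P = 1\<^sub>m n" by auto
  have Bk: "B ^\<^sub>m k \<in> carrier_mat n n" using B by simp
  have "A ^\<^sub>m k = P * B ^\<^sub>m k * Q" by (rule similar_mat_wit_pow_id[OF w])
  also have "\<dots> = P * (B ^\<^sub>m k * Q)" using P Bk Q by (simp add: assoc_mult_mat)
  finally have "gtr (A ^\<^sub>m k) = gtr ((B ^\<^sub>m k * Q) * P)"
    using gtr_mult_comm[OF P, of "B ^\<^sub>m k * Q"] Bk Q by simp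
  also have "(B ^\<^sub>m k * Q) * P = B ^\<^sub>m k" using Bk Q P QP by (simp add: assoc_mult_mat right_mult_one_mat)
  finally show ?thesis .
qed

lemma eigen_real_nonneg:
  fixes L :: "real mat" and v :: "complex vec" and c :: complex
  assumes L: "L \<in> carrier_mat n n" and sym: "\<And>i j. i<n \<Longrightarrow> j<n \<Longrightarrow> L$$(i,j) = L$$(j,i)"
   and dd: "\<And>i. i<n \<Longrightarrow> (\<Sum>j\<in>{..<n}-{i}. \<bar>L$$(i,j)\<bar>) \<le> L$$(i,i)"
   and ev: "eigenvector (map_mat complex_of_real L) v c"
  shows "Im c = 0 \<and> 0 \<le> Re c"
proof -
  let ?Lc = "map_mat complex_of_real L"
  from ev L have v: "v \<in> carrier_vec n" and v0: "v \<noteq> 0\<^sub>v n" and Av: "?Lc *\<^sub>v v = c \<cdot>\<^sub>v v"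
    unfolding eigenvector_def by auto
  have comp: "(\<Sum>j<n. of_real (L$$(i,j)) * v$j) = c * v$i" if i: "i<n" for i
  proof -
    have "(?Lc *\<^sub>v v) $ i = (c \<cdot>\<^sub>v v) $ i" using Av by simp
    then show ?thesis using i L v by (simp add: scalar_prod_def lessThan_atLeast0)
  qed
  define s where "s = (\<Sum>i<n. \<Sum>j<n. cnj (v$i) * of_real (L$$(i,j)) * v$j)"
  have "cnj s = (\<Sum>i<n. \<Sum>j<n. v$i * of_real (L$$(i,j)) * cnj (v$j))"
    unfolding s_def by (simp add: mult.commute)
  also have "\<dots> = (\<Sum>j<n. \<Sum>i<n. v$i * of_real (L$$(i,j)) * cnj (v$j))"
    by (rule sum.swap)
  also have "\<dots> = s" unfolding s_def
    by (intro sum.cong refl) (simp add: sym mult.commute mult.left_commute)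
  finally have cs: "cnj s = s" .
  have "s = (\<Sum>i<n. cnj (v$i) * (c * v$i))"
    unfolding s_def by (intro sum.cong refl) (simp add: comp[symmetric] sum_distrib_left mult.assoc)
  also have "\<dots> = (\<Sum>i<n. c * of_real ((cmod (v$i))^2))"
  proof (intro sum.cong refl)
    fix i show "cnj (v$i) * (c * v$i) = c * of_real ((cmod (v$i))^2)"
      by (simp only: complex_norm_square) (simp add: algebra_simps)
  qed
  also have "\<dots> = c * of_real (\<Sum>i<n. (cmod (v$i))^2)"
    by (simp only: sum_distrib_left of_real_sum)
  finally have sR: "s = c * of_real (\<Sum>i<n. (cmod (v$i))^2)" .
  obtain i0 where i0: "i0 < n" "v$i0 \<noteq> 0" using v v0 by (metis eq_vecI index_zero_vec(1) carrier_vecD index_zero_vec(2))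
  have Rpos: "(\<Sum>i<n. (cmod (v$i))^2) > 0"
  proof -
    have "(cmod (v$i0))^2 > 0" using i0 by simp
    also have "(cmod (v$i0))^2 \<le> (\<Sum>i<n. (cmod (v$i))^2)"
      by (rule member_le_sum) (use i0 in auto)
    finally show ?thesis .
  qed
  from cs have "Im s = 0" by (metis complex_cnj_cancel_iff complex_cnj_zero_iff diff_self Im_complex_div_eq_0 complex_is_Real_iff Reals_cnj_iff)
  then have im: "Im c = 0" using sR Rpos by simp
  \<comment> \<open>Gershgorin\<close>
  have fin: "finite ((\<lambda>i. cmod (v$i)) ` {..<n})" by simp
  have ne: "(\<lambda>i. cmod (v$i)) ` {..<n} \<noteq> {}" using i0 by auto
  obtain i where i: "i < n" and imax: "cmod (v$i) = Max ((\<lambda>i. cmod (v$i)) ` {..<n})"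
    using Max_in[OF fin ne] by auto
  have le: "cmod (v$j) \<le> cmod (v$i)" if "j < n" for j using imax that fin by auto
  have vi: "cmod (v$i) > 0" using le[OF i0(1)] i0 by auto
  have "c * v$i = (\<Sum>j<n. of_real (L$$(i,j)) * v$j)" using comp[OF i] by simp
  also have "\<dots> = of_real (L$$(i,i)) * v$i + (\<Sum>j\<in>{..<n}-{i}. of_real (L$$(i,j)) * v$j)"
    by (rule sum.remove) (use i in auto)
  finally have "(c - of_real (L$$(i,i))) * v$i = (\<Sum>j\<in>{..<n}-{i}. of_real (L$$(i,j)) * v$j)"
    by (simp add: algebra_simps)
  then have "cmod (c - of_real (L$$(i,i))) * cmod (v$i) = cmod (\<Sum>j\<in>{..<n}-{i}. of_real (L$$(i,j)) * v$j)"
    by (metis norm_mult)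
  also have "\<dots> \<le> (\<Sum>j\<in>{..<n}-{i}. \<bar>L$$(i,j)\<bar> * cmod (v$j))"
    by (rule order_trans[OF norm_sum]) (simp add: norm_mult)
  also have "\<dots> \<le> (\<Sum>j\<in>{..<n}-{i}. \<bar>L$$(i,j)\<bar> * cmod (v$i))"
    by (intro sum_mono mult_left_mono le) auto
  also have "\<dots> = (\<Sum>j\<in>{..<n}-{i}. \<bar>L$$(i,j)\<bar>) * cmod (v$i)"
    by (simp add: sum_distrib_right)
  also have "\<dots> \<le> L$$(i,i) * cmod (v$i)"
    by (intro mult_right_mono dd[OF i]) auto
  finally have "cmod (c - of_real (L$$(i,i))) \<le> L$$(i,i)" using vi by simp
  moreover have "\<bar>Re c - L$$(i,i)\<bar> \<le> cmod (c - of_real (L$$(i,i)))"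
    using abs_Re_le_cmod[of "c - of_real (L$$(i,i))"] by simp
  ultimately have "0 \<le> Re c" by linarith
  with im show ?thesis by simp
qed

lemma spectral:
  fixes L :: "real mat"
  assumes L: "L \<in> carrier_mat n n" and sym: "\<And>i j. i<n \<Longrightarrow> j<n \<Longrightarrow> L$$(i,j) = L$$(j,i)"
   and dd: "\<And>i. i<n \<Longrightarrow> (\<Sum>j\<in>{..<n}-{i}. \<bar>L$$(i,j)\<bar>) \<le> L$$(i,i)"
  shows "\<exists>es::real list. length es = n \<and> (\<forall>e\<in>set es. 0 \<le> e)
     \<and> (\<forall>k. gtr (L ^\<^sub>m k) = (\<Sum>e\<leftarrow>es. e^k))
     \<and> (\<forall>c. det (c \<cdot>\<^sub>m 1\<^sub>m n - L) = (\<Prod>e\<leftarrow>es. c - e))"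
proof -
  define Lc where "Lc = map_mat complex_of_real L"
  have Lc: "Lc \<in> carrier_mat n n" using L unfolding Lc_def by simp
  obtain cs where cp: "char_poly Lc = (\<Prod>a\<leftarrow>cs. [:- a, 1:])" and len: "length cs = n"
    using char_poly_factorized[OF Lc] by blast
  have real: "Im c = 0 \<and> 0 \<le> Re c" if c: "c \<in> set cs" for c
  proof -
    have "poly (char_poly Lc) c = 0" unfolding cp poly_prod_list
      using c by (induct cs) auto
    then have "eigenvalue Lc c" using eigenvalue_root_char_poly[OF Lc] by simp
    then obtain v where "eigenvector Lc v c" unfolding eigenvalue_def by blast
    then show ?thesis using eigen_real_nonneg[OF L sym dd] unfolding Lc_def by blast
  qed
  define es where "es = map Re cs"
  have cs_es: "cs = map complex_of_real es" unfolding es_def map_map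
  proof (rule HOL.sym, rule map_idI)
    fix c assume "c \<in> set cs" then show "(complex_of_real \<circ> Re) c = c"
      using real by (auto simp: complex_eq_iff)
  qed
  show ?thesis
  proof (intro exI conjI allI ballI)
    show "length es = n" using len es_def by simp
  next
    fix e assume "e \<in> set es" then show "0 \<le> e" using real es_def by auto
  next
    fix c :: real
    have "complex_of_real (det (c \<cdot>\<^sub>m 1\<^sub>m n - L)) = det (map_mat complex_of_real (c \<cdot>\<^sub>m 1\<^sub>m n - L))"
      by simp
    also have "map_mat complex_of_real (c \<cdot>\<^sub>m 1\<^sub>m n - L) = - char_matrix Lc (of_real c)"
      unfolding char_matrix_def Lc_def using L by (auto intro!: eq_matI)
    also have "det \<dots> = poly (char_poly Lc) (of_real c)" using char_poly_matrix[OF Lc] by simp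
    also have "\<dots> = (\<Prod>e\<leftarrow>es. of_real c - of_real e)" unfolding cp poly_prod_list cs_es
      by (simp add: o_def)
    also have "\<dots> = complex_of_real (\<Prod>e\<leftarrow>es. c - e)" by (induct es) auto
    finally show "det (c \<cdot>\<^sub>m 1\<^sub>m n - L) = (\<Prod>e\<leftarrow>es. c - e)" by (simp only: of_real_eq_iff)
  next
    fix k :: nat
    obtain B P Q where sd: "schur_decomposition Lc cs = (B,P,Q)" by (cases "schur_decomposition Lc cs") auto
    from schur_decomposition[OF Lc cp sd] have w: "similar_mat_wit Lc B P Q"
      and ut: "upper_triangular B" and dg: "diag_mat B = cs" by auto
    from similar_mat_witD2[OF Lc w] have B: "B \<in> carrier_mat n n" by auto
    have "complex_of_real (gtr (L ^\<^sub>m k)) = gtr (map_mat complex_of_real (L ^\<^sub>m k))"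
      unfolding gtr_def using L by (simp add: of_real_sum)
    also have "map_mat complex_of_real (L ^\<^sub>m k) = Lc ^\<^sub>m k"
      unfolding Lc_def by (rule of_real_hom.mat_hom_pow[OF L])
    also have "gtr \<dots> = gtr (B ^\<^sub>m k)" by (rule gtr_similar_pow[OF w Lc])
    also have "\<dots> = (\<Sum>i<n. B $$ (i,i) ^ k)" unfolding gtr_def
      using upper_tri_pow[OF B ut, of k] B by simp
    also have "\<dots> = (\<Sum>i<n. (cs ! i) ^ k)"
      using dg B by (intro sum.cong refl) (auto simp: diag_mat_def)
    also have "\<dots> = (\<Sum>c\<leftarrow>cs. c^k)" using len
      by (simp add: sum_list_sum_nth lessThan_atLeast0)
    also have "\<dots> = complex_of_real (\<Sum>e\<leftarrow>es. e^k)" unfolding cs_es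
      by (induct es) auto
    finally show "gtr (L ^\<^sub>m k) = (\<Sum>e\<leftarrow>es. e^k)" by (simp only: of_real_eq_iff)
  qed
qed


lemma lser: fixes y :: real assumes "0 \<le> y" "y < 1"
  shows "(\<lambda>k. y^k / real k) sums (- ln (1 - y))"
proof -
  have "(\<lambda>n. - ((-(-y))^n) / of_nat n) sums ln (1 + (-y))"
    by (rule ln_series') (use assms in auto)
  then have "(\<lambda>n. - (y^n / real n)) sums ln (1 - y)" by simp
  then show ?thesis using sums_minus by fastforce
qed

definition psum :: "real list \<Rightarrow> nat \<Rightarrow> real" where
  "psum xs k = (\<Sum>x\<leftarrow>xs. x^k)"

definition tailS :: "real \<Rightarrow> nat \<Rightarrow> real" where
  "tailS y m = (\<Sum>j. y^(j+m) / real (j+m))"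

lemma psum_sums:
  fixes xs :: "real list"
  assumes "\<forall>x\<in>set xs. 0 \<le> x \<and> x < 1"
  shows "(\<lambda>k. psum xs k / real k) sums (- (\<Sum>x\<leftarrow>xs. ln (1 - x)))"
  using assms
proof (induct xs)
  case Nil then show ?case by (simp add: psum_def)
next
  case (Cons x xs)
  have "(\<lambda>k. x^k / real k + psum xs k / real k) sums (- ln (1 - x) + - (\<Sum>x\<leftarrow>xs. ln (1 - x)))"
    by (rule sums_add) (use Cons lser in auto)
  then show ?case by (simp add: psum_def add_divide_distrib)
qed

lemma prod_exp:
  fixes xs :: "real list"
  assumes "\<forall>x\<in>set xs. 0 \<le> x \<and> x < 1"
  shows "(\<Prod>x\<leftarrow>xs. 1 - x) = exp (\<Sum>x\<leftarrow>xs. ln (1 - x))"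
  using assms
proof (induct xs)
  case Nil then show ?case by simp
next
  case (Cons a xs)
  have "exp (\<Sum>x\<leftarrow>a#xs. ln (1 - x)) = exp (ln (1 - a)) * exp (\<Sum>x\<leftarrow>xs. ln (1 - x))"
    by (simp only: list.map sum_list.Cons) (rule exp_add_commuting, simp add: mult.commute)
  also have "exp (ln (1 - a)) = 1 - a" using Cons by simp
  finally show ?case using Cons by simp
qed

lemma prod_tail:
  assumes "\<forall>x\<in>set xs. 0 \<le> x \<and> x < 1"
  shows "(\<Prod>x\<leftarrow>xs. 1 - x) = exp (- (\<Sum>k<m. psum xs k / real k) - (\<Sum>j. psum xs (j+m) / real (j+m)))"
proof -
  have "(\<lambda>j. psum xs (j+m) / real (j+m)) sums (- (\<Sum>x\<leftarrow>xs. ln (1 - x)) - (\<Sum>k<m. psum xs k / real k))"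
    using sums_split_initial_segment[OF psum_sums[OF assms], of m] by simp
  then have "(\<Sum>j. psum xs (j+m) / real (j+m)) = - (\<Sum>x\<leftarrow>xs. ln (1 - x)) - (\<Sum>k<m. psum xs k / real k)"
    by (rule sums_unique[symmetric])
  then show ?thesis using prod_exp[OF assms] by simp
qed

lemma bound_tail:
  fixes M :: real assumes "0 \<le> M" "M < 1"
  shows "(1 - M) * exp (- (\<Sum>k=1..<m. (psum xs k - M^k) / real k))
     = exp (- (\<Sum>k<m. psum xs k / real k) - tailS M m)"
proof -
  have "(\<lambda>j. M^(j+m) / real (j+m)) sums (- ln (1 - M) - (\<Sum>k<m. M^k / real k))"
    using sums_split_initial_segment[OF lser[OF assms], of m] by simp
  then have T: "tailS M m = - ln (1 - M) - (\<Sum>k<m. M^k / real k)"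
    unfolding tailS_def by (rule sums_unique[symmetric])
  have S: "(\<Sum>k=1..<m. (psum xs k - M^k) / real k) = (\<Sum>k<m. (psum xs k - M^k) / real k)"
  proof (cases m)
    case 0 then show ?thesis by simp
  next
    case (Suc m')
    have "{..<m} = insert 0 {1..<m}" using Suc by auto
    then show ?thesis by simp
  qed
  have e: "exp (ln (1 - M)) = 1 - M" using assms by simp
  have "exp (ln (1 - M) - (\<Sum>k<m. (psum xs k - M^k) / real k))
     = exp (ln (1 - M)) * exp (- (\<Sum>k<m. (psum xs k - M^k) / real k))"
    by (simp only: diff_conv_add_uminus exp_add)
  then have "(1 - M) * exp (- (\<Sum>k=1..<m. (psum xs k - M^k) / real k))
     = exp (ln (1 - M) - (\<Sum>k<m. (psum xs k - M^k) / real k))"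
    by (simp only: S e)
  also have "ln (1 - M) - (\<Sum>k<m. (psum xs k - M^k) / real k) = - (\<Sum>k<m. psum xs k / real k) - tailS M m"
    unfolding T by (simp add: sum_subtractf diff_divide_distrib)
  finally show ?thesis .
qed

lemma psum_le:
  assumes xs: "\<forall>x\<in>set xs. 0 \<le> x \<and> x \<le> M" and k: "m \<le> k" and pm: "psum xs m = M^m"
  shows "psum xs k \<le> M^k"
proof -
  have "psum xs k = (\<Sum>x\<leftarrow>xs. x^m * x^(k-m))" unfolding psum_def
    by (rule arg_cong[where f=sum_list], rule map_cong) (use k in \<open>auto simp: power_add[symmetric]\<close>)
  also have "\<dots> \<le> (\<Sum>x\<leftarrow>xs. x^m * M^(k-m))"
    by (rule sum_list_mono) (use xs in \<open>auto intro!: mult_left_mono power_mono\<close>)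
  also have "\<dots> = psum xs m * M^(k-m)" unfolding psum_def by (induct xs) (auto simp: algebra_simps)
  also have "\<dots> = M^k" using pm k by (simp add: power_add[symmetric])
  finally show ?thesis .
qed

lemma main_ineq:
  assumes xs: "\<forall>x\<in>set xs. 0 \<le> x \<and> x < 1" and M: "0 \<le> M"
    and xM: "\<forall>x\<in>set xs. x \<le> M" and pm: "psum xs m = M^m"
  shows "(1 - M) * exp (- (\<Sum>k=1..<m. (psum xs k - M^k) / real k)) \<le> (\<Prod>x\<leftarrow>xs. 1 - x)"
proof (cases "M < 1")
  case False
  have "0 \<le> (\<Prod>x\<leftarrow>xs. 1 - x)" using xs by (induct xs) auto
  moreover have "(1 - M) * exp (- (\<Sum>k=1..<m. (psum xs k - M^k) / real k)) \<le> 0"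
    using False by (intro mult_nonpos_nonneg) auto
  ultimately show ?thesis by linarith
next
  case True
  have s1: "summable (\<lambda>j. psum xs (j+m) / real (j+m))"
    using sums_split_initial_segment[OF psum_sums[OF xs], of m] by (simp add: sums_iff)
  have s2: "summable (\<lambda>j. M^(j+m) / real (j+m))"
    using sums_split_initial_segment[OF lser[OF M True], of m] by (simp add: sums_iff)
  have "(\<Sum>j. psum xs (j+m) / real (j+m)) \<le> tailS M m" unfolding tailS_def
  proof (rule suminf_le[OF _ s1 s2])
    fix j
    have "psum xs (j+m) \<le> M^(j+m)" by (rule psum_le[of xs M m "j+m"]) (use xs xM pm in auto)
    then show "psum xs (j+m) / real (j+m) \<le> M^(j+m) / real (j+m)" by (simp add: divide_right_mono)
  qed
  then show ?thesis unfolding bound_tail[OF M True] prod_tail[OF xs, of m] by simp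
qed

lemma powr_root_pow: fixes a :: real assumes "0 \<le> a" "0 < m"
  shows "(a powr (1 / real m))^m = a"
proof -
  have "(a powr (1 / real m))^m = (a powr (1 / real m)) powr (real m)"
    using assms by (simp add: powr_realpow')
  also have "\<dots> = a powr 1" using assms by (simp add: powr_powr)
  finally show ?thesis using assms by simp
qed

lemma pow_powr_root: fixes X :: real assumes "0 \<le> X" "0 < m"
  shows "(X^m) powr (1 / real m) = X"
proof -
  have "(X^m) powr (1 / real m) = (X powr real m) powr (1 / real m)"
    using assms by (simp add: powr_realpow')
  also have "\<dots> = X powr 1" using assms by (simp add: powr_powr)
  finally show ?thesis using assms by simp
qed

lemma psum_nonneg: "\<forall>x\<in>set xs. 0 \<le> x \<Longrightarrow> 0 \<le> psum xs k"
  unfolding psum_def by (induct xs) auto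

lemma tailS_bound: fixes M :: real assumes "0 \<le> M" "M < 1" "0 < m"
  shows "0 \<le> tailS M m \<and> tailS M m \<le> M^m / (1 - M)"
proof -
  have s2: "summable (\<lambda>j. M^(j+m) / real (j+m))"
    using sums_split_initial_segment[OF lser[OF assms(1,2)], of m] by (simp add: sums_iff)
  have g: "(\<lambda>j. M^m * M^j) sums (M^m * (1 / (1 - M)))"
    by (rule sums_mult, rule geometric_sums) (use assms in auto)
  have "tailS M m \<le> (\<Sum>j. M^m * M^j)" unfolding tailS_def
  proof (rule suminf_le[OF _ s2])
    fix j
    have "M^(j+m) / real (j+m) \<le> M^(j+m) / 1"
      by (rule divide_left_mono) (use assms in auto)
    then show "M^(j+m) / real (j+m) \<le> M^m * M^j" by (simp add: power_add mult.commute)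
  next
    show "summable (\<lambda>j. M^m * M^j)" using g by (simp add: sums_iff)
  qed
  also have "\<dots> = M^m / (1 - M)" using g by (simp add: sums_iff)
  finally have "tailS M m \<le> M^m / (1 - M)" .
  moreover have "0 \<le> tailS M m" unfolding tailS_def
    by (rule suminf_nonneg[OF s2]) (use assms in auto)
  ultimately show ?thesis by simp
qed

lemma main_lim:
  fixes xs :: "real list"
  assumes xs: "\<forall>x\<in>set xs. 0 \<le> x \<and> x < 1"
  shows "(\<lambda>m. (1 - psum xs m powr (1/real m)) *
      exp (- (\<Sum>k=1..<m. (psum xs k - (psum xs m powr (1/real m))^k) / real k)))
     \<longlonglongrightarrow> (\<Prod>x\<leftarrow>xs. 1 - x)"
proof -
  define Mf where "Mf m = psum xs m powr (1/real m)" for m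
  define X where "X = Max (insert 0 (set xs))"
  define N where "N = real (length xs) + 1"
  have X0: "0 \<le> X" unfolding X_def by simp
  have X1: "X < 1" unfolding X_def using xs by simp
  have xX: "x \<le> X" if "x \<in> set xs" for x unfolding X_def using that by simp
  have N: "0 < N" unfolding N_def by simp
  have pN: "psum xs m \<le> N * X^m" for m
  proof -
    have "psum xs m \<le> (\<Sum>x\<leftarrow>xs. X^m)" unfolding psum_def
      by (rule sum_list_mono) (use xs xX in \<open>auto intro!: power_mono\<close>)
    also have "\<dots> = real (length xs) * X^m" by (simp add: sum_list_triv)
    also have "\<dots> \<le> N * X^m" unfolding N_def using X0 by (simp add: algebra_simps)
    finally show ?thesis .
  qed
  have pnn: "0 \<le> psum xs m" for m using psum_nonneg xs by auto
  have Mnn: "0 \<le> Mf m" for m unfolding Mf_def by simp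
  have Mpow: "Mf m ^ m = psum xs m" if "0 < m" for m
    unfolding Mf_def by (rule powr_root_pow[OF pnn that])
  have MN: "Mf m \<le> N powr (1 / real m) * X" if "0 < m" for m
  proof -
    have "Mf m \<le> (N * X^m) powr (1 / real m)" unfolding Mf_def
      by (rule powr_mono2) (use pN pnn in auto)
    also have "\<dots> = N powr (1 / real m) * X"
      using N X0 that by (simp add: powr_mult pow_powr_root)
    finally show ?thesis .
  qed
  define c where "c = (1 + X) / 2"
  have c1: "c < 1" and Xc: "X < c" unfolding c_def using X1 by auto
  have "(\<lambda>m. N powr (1 / real m) * X) \<longlonglongrightarrow> N powr 0 * X"
    by (intro tendsto_intros) (use N lim_inverse_n' in auto)
  then have "(\<lambda>m. N powr (1 / real m) * X) \<longlonglongrightarrow> X" using N by simp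
  then have ev1: "eventually (\<lambda>m. N powr (1 / real m) * X < c) sequentially"
    using order_tendstoD(2)[OF _ Xc] by blast
  have ev: "eventually (\<lambda>m. 0 < m \<and> Mf m \<le> c) sequentially"
    using ev1 eventually_gt_at_top[of 0]
  proof eventually_elim
    case (elim m)
    then show ?case using MN[of m] by linarith
  qed
  have xM: "\<forall>x\<in>set xs. x \<le> Mf m" if "0 < m" for m
  proof
    fix x assume x: "x \<in> set xs"
    have "x^m \<le> psum xs m" unfolding psum_def using x xs
    proof (induct xs)
      case Nil then show ?case by simp
    next
      case (Cons a ys)
      have nn: "0 \<le> (\<Sum>x\<leftarrow>ys. x^m)" using psum_nonneg[of ys m] Cons.prems unfolding psum_def by auto
      show ?case
      proof (cases "x = a")
        case True then show ?thesis using nn by simp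
      next
        case False
        then have "x^m \<le> (\<Sum>x\<leftarrow>ys. x^m)" using Cons by auto
        moreover have "0 \<le> a^m" using Cons.prems by auto
        ultimately show ?thesis by simp
      qed
    qed
    then have "x^m \<le> Mf m ^ m" using Mpow[OF that] by simp
    then show "x \<le> Mf m" using power_le_imp_le_base[of x "m - 1" "Mf m"] that Mnn[of m] by simp
  qed
  have A: "(\<lambda>m. \<Sum>k<m. psum xs k / real k) \<longlonglongrightarrow> - (\<Sum>x\<leftarrow>xs. ln (1 - x))"
    using psum_sums[OF xs] unfolding sums_def .
  have T: "(\<lambda>m. tailS (Mf m) m) \<longlonglongrightarrow> 0"
  proof (rule tendsto_sandwich[of "\<lambda>_. 0" _ _ "\<lambda>m. N * X^m / (1 - c)"])
    show "eventually (\<lambda>m. 0 \<le> tailS (Mf m) m) sequentially"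
      using ev
    proof eventually_elim
      case (elim m)
      then have "Mf m < 1" using c1 by linarith
      then show ?case using tailS_bound[OF Mnn[of m]] elim by blast
    qed
    show "eventually (\<lambda>m. tailS (Mf m) m \<le> N * X^m / (1 - c)) sequentially"
      using ev
    proof eventually_elim
      case (elim m)
      then have m: "0 < m" and Mc: "Mf m \<le> c" by auto
      have "tailS (Mf m) m \<le> Mf m ^ m / (1 - Mf m)"
        using tailS_bound[OF Mnn _ m] Mc c1 by auto
      also have "\<dots> \<le> N * X^m / (1 - c)"
      proof (rule frac_le)
        show "Mf m ^ m \<le> N * X^m" using Mpow[OF m] pN by simp
        show "0 < 1 - c" using c1 by simp
        show "1 - c \<le> 1 - Mf m" using Mc by simp
      qed (use N X0 in auto)
      finally show ?case .
    qed
    show "(\<lambda>_. 0::real) \<longlonglongrightarrow> 0" by simp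
    have "(\<lambda>m. N * X^m / (1 - c)) \<longlonglongrightarrow> N * 0 / (1 - c)"
      by (intro tendsto_intros) (use X0 X1 c1 in auto)
    then show "(\<lambda>m. N * X^m / (1 - c)) \<longlonglongrightarrow> 0" by simp
  qed
  have "(\<lambda>m. exp (- (\<Sum>k<m. psum xs k / real k) - tailS (Mf m) m))
      \<longlonglongrightarrow> exp (- (- (\<Sum>x\<leftarrow>xs. ln (1 - x))) - 0)"
    by (intro tendsto_intros A T)
  then have L: "(\<lambda>m. exp (- (\<Sum>k<m. psum xs k / real k) - tailS (Mf m) m))
      \<longlonglongrightarrow> (\<Prod>x\<leftarrow>xs. 1 - x)" using prod_exp[OF xs] by simp
  show ?thesis unfolding Mf_def[symmetric]
  proof (rule Lim_transform_eventually[OF L])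
    show "eventually (\<lambda>m. exp (- (\<Sum>k<m. psum xs k / real k) - tailS (Mf m) m) =
        (1 - Mf m) * exp (- (\<Sum>k=1..<m. (psum xs k - Mf m ^ k) / real k))) sequentially"
      using ev
    proof eventually_elim
      case (elim m)
      then have "Mf m < 1" using c1 by linarith
      from bound_tail[OF Mnn[of m] this, of xs m] show ?case by simp
    qed
  qed
qed


definition tu_ok :: "nat \<Rightarrow> real mat \<Rightarrow> bool" where
  "tu_ok k M \<longleftrightarrow> M \<in> carrier_mat k k \<and> (\<forall>i<k. \<forall>j<k. M$$(i,j) \<in> {-1,0,1})
     \<and> (\<forall>i1<k. \<forall>i2<k. \<forall>j<k. M$$(i1,j) = 1 \<longrightarrow> M$$(i2,j) = 1 \<longrightarrow> i1 = i2)
     \<and> (\<forall>i1<k. \<forall>i2<k. \<forall>j<k. M$$(i1,j) = -1 \<longrightarrow> M$$(i2,j) = -1 \<longrightarrow> i1 = i2)"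

lemma tu_okD:
  assumes "tu_ok k M"
  shows "M \<in> carrier_mat k k" "\<And>i j. i<k \<Longrightarrow> j<k \<Longrightarrow> M$$(i,j) \<in> {-1,0,1}"
    "\<And>i1 i2 j. i1<k \<Longrightarrow> i2<k \<Longrightarrow> j<k \<Longrightarrow> M$$(i1,j) = 1 \<Longrightarrow> M$$(i2,j) = 1 \<Longrightarrow> i1 = i2"
    "\<And>i1 i2 j. i1<k \<Longrightarrow> i2<k \<Longrightarrow> j<k \<Longrightarrow> M$$(i1,j) = -1 \<Longrightarrow> M$$(i2,j) = -1 \<Longrightarrow> i1 = i2"
  using assms unfolding tu_ok_def by simp_all

lemma tu_ok_delete:
  assumes ok: "tu_ok (Suc k) M" and i: "i < Suc k" and j: "j < Suc k"
  shows "tu_ok k (mat_delete M i j)"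
proof -
  let ?f = "\<lambda>i'. if i' < i then i' else Suc i'"
  let ?g = "\<lambda>j'. if j' < j then j' else Suc j'"
  have M: "M \<in> carrier_mat (Suc k) (Suc k)" using ok unfolding tu_ok_def by auto
  have idx: "mat_delete M i j $$ (i',j') = M $$ (?f i', ?g j')" if "i' < k" "j' < k" for i' j'
    using M that unfolding mat_delete_def by auto
  have f: "?f i' < Suc k" if "i' < k" for i' using that by auto
  have g: "?g j' < Suc k" if "j' < k" for j' using that by auto
  have finj: "?f a = ?f b \<Longrightarrow> a = b" for a b by (auto split: if_splits)
  show ?thesis unfolding tu_ok_def
  proof (intro conjI allI impI)
    show "mat_delete M i j \<in> carrier_mat k k" using M by (auto simp: mat_delete_def)
  next
    fix i' j' assume "i' < k" "j' < k"
    moreover have "M $$ (?f i', ?g j') \<in> {-1,0,1}" using f g tu_okD(2)[OF ok] \<open>i' < k\<close> \<open>j' < k\<close> by blast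
    ultimately show "mat_delete M i j $$ (i',j') \<in> {-1,0,1}" using idx by simp
  next
    fix i1 i2 j' assume a: "i1 < k" "i2 < k" "j' < k" "mat_delete M i j $$ (i1,j') = 1" "mat_delete M i j $$ (i2,j') = 1"
    then have "M $$ (?f i1, ?g j') = 1" "M $$ (?f i2, ?g j') = 1" using idx by auto
    then have "?f i1 = ?f i2" by (rule tu_okD(3)[OF ok f[OF a(1)] f[OF a(2)] g[OF a(3)]])
    then show "i1 = i2" by (rule finj)
  next
    fix i1 i2 j' assume a: "i1 < k" "i2 < k" "j' < k" "mat_delete M i j $$ (i1,j') = -1" "mat_delete M i j $$ (i2,j') = -1"
    then have "M $$ (?f i1, ?g j') = -1" "M $$ (?f i2, ?g j') = -1" using idx by auto
    then have "?f i1 = ?f i2" by (rule tu_okD(4)[OF ok f[OF a(1)] f[OF a(2)] g[OF a(3)]])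
    then show "i1 = i2" by (rule finj)
  qed
qed

lemma tu_det: "tu_ok k M \<Longrightarrow> det M \<in> {-1,0,1}"
proof (induct k arbitrary: M)
  case 0
  then have "M \<in> carrier_mat 0 0" unfolding tu_ok_def by auto
  then show ?case by simp
next
  case (Suc k M)
  have M: "M \<in> carrier_mat (Suc k) (Suc k)" using Suc.prems unfolding tu_ok_def by auto
  have vals: "\<And>i j. i < Suc k \<Longrightarrow> j < Suc k \<Longrightarrow> M$$(i,j) \<in> {-1,0,1}"
    using Suc.prems unfolding tu_ok_def by auto
  have u1: "\<And>i1 i2 j. i1 < Suc k \<Longrightarrow> i2 < Suc k \<Longrightarrow> j < Suc k \<Longrightarrow> M$$(i1,j) = 1 \<Longrightarrow> M$$(i2,j) = 1 \<Longrightarrow> i1 = i2"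
    by (rule tu_okD(3)[OF Suc.prems])
  have u2: "\<And>i1 i2 j. i1 < Suc k \<Longrightarrow> i2 < Suc k \<Longrightarrow> j < Suc k \<Longrightarrow> M$$(i1,j) = -1 \<Longrightarrow> M$$(i2,j) = -1 \<Longrightarrow> i1 = i2"
    by (rule tu_okD(4)[OF Suc.prems])
  show ?case
  proof (cases "\<exists>j<Suc k. \<forall>i1<Suc k. \<forall>i2<Suc k. M$$(i1,j) \<noteq> 0 \<longrightarrow> M$$(i2,j) \<noteq> 0 \<longrightarrow> i1 = i2")
    case True
    then obtain j where j: "j < Suc k" and one: "\<And>i1 i2. i1<Suc k \<Longrightarrow> i2<Suc k \<Longrightarrow> M$$(i1,j) \<noteq> 0 \<Longrightarrow> M$$(i2,j) \<noteq> 0 \<Longrightarrow> i1 = i2"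
      by blast
    have exp: "det M = (\<Sum>i<Suc k. M $$ (i,j) * cofactor M i j)"
      by (rule laplace_expansion_column[OF M j])
    show ?thesis
    proof (cases "\<exists>i<Suc k. M$$(i,j) \<noteq> 0")
      case False
      then have "det M = 0" unfolding exp by (intro sum.neutral) auto
      then show ?thesis by simp
    next
      case True
      then obtain i where i: "i < Suc k" and nz: "M$$(i,j) \<noteq> 0" by blast
      have "det M = M $$ (i,j) * cofactor M i j + (\<Sum>i'\<in>{..<Suc k}-{i}. M $$ (i',j) * cofactor M i' j)"
        unfolding exp by (rule sum.remove) (use i in auto)
      also have "(\<Sum>i'\<in>{..<Suc k}-{i}. M $$ (i',j) * cofactor M i' j) = 0"
      proof (intro sum.neutral ballI)
        fix i' assume i': "i' \<in> {..<Suc k}-{i}"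
        then have "M$$(i',j) = 0" using one[of i' i] i nz by auto
        then show "M $$ (i',j) * cofactor M i' j = 0" by simp
      qed
      finally have dM: "det M = M $$ (i,j) * ((-1)^(i+j) * det (mat_delete M i j))"
        unfolding cofactor_def by simp
      have "det (mat_delete M i j) \<in> {-1,0,1}"
        by (rule Suc.hyps, rule tu_ok_delete[OF Suc.prems i j])
      moreover have "M $$ (i,j) \<in> {-1,0,1}" using vals i j by auto
      moreover have "(-1::real)^(i+j) \<in> {-1,1}" by (cases "even (i+j)") auto
      ultimately show ?thesis unfolding dM by auto
    qed
  next
    case False
    then have two: "\<And>j. j < Suc k \<Longrightarrow> \<exists>i1<Suc k. \<exists>i2<Suc k. M$$(i1,j) \<noteq> 0 \<and> M$$(i2,j) \<noteq> 0 \<and> i1 \<noteq> i2"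
      by blast
    have colsum: "(\<Sum>i<Suc k. M$$(i,j)) = 0" if j: "j < Suc k" for j
    proof -
      obtain i1 i2 where i12: "i1 < Suc k" "i2 < Suc k" "M$$(i1,j) \<noteq> 0" "M$$(i2,j) \<noteq> 0" "i1 \<noteq> i2"
        using two[OF j] by blast
      have v1: "M$$(i1,j) = 1 \<or> M$$(i1,j) = -1" using vals[OF i12(1) j] i12 by auto
      have v2: "M$$(i2,j) = 1 \<or> M$$(i2,j) = -1" using vals[OF i12(2) j] i12 by auto
      have opp: "M$$(i1,j) + M$$(i2,j) = 0" using v1 v2 u1[OF i12(1,2) j] u2[OF i12(1,2) j] i12(5) by auto
      have rest: "M$$(i,j) = 0" if "i < Suc k" "i \<noteq> i1" "i \<noteq> i2" for i
      proof (rule ccontr)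
        assume "M$$(i,j) \<noteq> 0"
        then have "M$$(i,j) = 1 \<or> M$$(i,j) = -1" using vals[OF that(1) j] by auto
        then show False
        proof
          assume h: "M$$(i,j) = 1"
          show False
          proof (cases "M$$(i1,j) = 1")
            case True then show False using u1[OF that(1) i12(1) j h] that by simp
          next
            case False
            then have "M$$(i2,j) = 1" using v1 opp by auto
            then show False using u1[OF that(1) i12(2) j h] that by simp
          qed
        next
          assume h: "M$$(i,j) = -1"
          show False
          proof (cases "M$$(i1,j) = -1")
            case True then show False using u2[OF that(1) i12(1) j h] that by simp
          next
            case False
            then have "M$$(i2,j) = -1" using v1 opp by auto
            then show False using u2[OF that(1) i12(2) j h] that by simp
          qed
        qed
      qed
      have "(\<Sum>i<Suc k. M$$(i,j)) = M$$(i1,j) + (\<Sum>i\<in>{..<Suc k}-{i1}. M$$(i,j))"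
        by (rule sum.remove) (use i12 in auto)
      also have "(\<Sum>i\<in>{..<Suc k}-{i1}. M$$(i,j)) = M$$(i2,j) + (\<Sum>i\<in>{..<Suc k}-{i1}-{i2}. M$$(i,j))"
        by (rule sum.remove) (use i12 in auto)
      also have "(\<Sum>i\<in>{..<Suc k}-{i1}-{i2}. M$$(i,j)) = 0"
        by (intro sum.neutral ballI) (use rest in auto)
      finally show ?thesis using opp by simp
    qed
    let ?v = "vec (Suc k) (\<lambda>_. 1::real)"
    have MT: "transpose_mat M \<in> carrier_mat (Suc k) (Suc k)" using M by simp
    have "transpose_mat M *\<^sub>v ?v = 0\<^sub>v (Suc k)"
    proof (rule eq_vecI)
      fix j assume "j < dim_vec (0\<^sub>v (Suc k) :: real vec)"
      then have j: "j < Suc k" by simp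
      have "(transpose_mat M *\<^sub>v ?v) $ j = (\<Sum>i<Suc k. M$$(i,j))"
        using M j by (simp add: scalar_prod_def lessThan_atLeast0)
      then show "(transpose_mat M *\<^sub>v ?v) $ j = 0\<^sub>v (Suc k) $ j" using colsum[OF j] j by simp
    qed (use M in simp)
    moreover have "?v \<noteq> 0\<^sub>v (Suc k)"
    proof
      assume "?v = 0\<^sub>v (Suc k)"
      then have "?v $ 0 = 0\<^sub>v (Suc k) $ 0" by simp
      then show False by simp
    qed
    ultimately have "\<exists>v. v \<in> carrier_vec (Suc k) \<and> v \<noteq> 0\<^sub>v (Suc k) \<and> transpose_mat M *\<^sub>v v = 0\<^sub>v (Suc k)"
      by (intro exI[of _ ?v]) auto
    then have "det (transpose_mat M) = 0"
      using det_0_iff_vec_prod_zero_field[OF MT] by simp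
    then have "det M = 0" using det_transpose[OF M] by simp
    then show ?thesis by simp
  qed
qed


definition colsel :: "nat \<Rightarrow> 'a mat \<Rightarrow> (nat \<Rightarrow> nat) \<Rightarrow> 'a mat" where
  "colsel m A g = mat m m (\<lambda>(i,j). A $$ (i, g j))"

lemma AAT_entry:
  assumes A: "A \<in> carrier_mat m N" and i: "i < m" and j: "j < m"
  shows "(A * transpose_mat A) $$ (i,j) = (\<Sum>k\<in>{0..<N}. A$$(i,k) * A$$(j,k))"
  using A i j by (simp add: scalar_prod_def)

lemma det_colsel_transpose_sum:
  fixes A :: "'a::comm_ring_1 mat"
  shows "det (colsel m A g) = (\<Sum>p\<in>{p. p permutes {0..<m}}. signof p * (\<Prod>i=0..<m. A$$(p i, g i)))"
proof -
  have C: "colsel m A g \<in> carrier_mat m m" unfolding colsel_def by simp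
  have "det (colsel m A g) = det (transpose_mat (colsel m A g))" using det_transpose[OF C] by simp
  also have "\<dots> = (\<Sum>p\<in>{p. p permutes {0..<m}}. signof p * (\<Prod>i=0..<m. transpose_mat (colsel m A g) $$ (i, p i)))"
    by (rule det_def') (use C in simp)
  also have "\<dots> = (\<Sum>p\<in>{p. p permutes {0..<m}}. signof p * (\<Prod>i=0..<m. A$$(p i, g i)))"
  proof (intro sum.cong refl arg_cong2[where f="(*)"] prod.cong)
    fix p i assume p: "p \<in> {p. p permutes {0..<m}}" and i: "i \<in> {0..<m}"
    have "p i < m" using p i permutes_in_image by fastforce
    then show "transpose_mat (colsel m A g) $$ (i, p i) = A$$(p i, g i)"
      using i by (simp add: colsel_def)
  qed
  finally show ?thesis .
qed

lemma det_AAT_expand: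
  fixes A :: "'a::comm_ring_1 mat"
  assumes A: "A \<in> carrier_mat m N"
  shows "det (A * transpose_mat A) = (\<Sum>g \<in> {0..<m} \<rightarrow>\<^sub>E {0..<N}. (\<Prod>i=0..<m. A$$(i,g i)) * det (colsel m A g))"
proof -
  have AA: "A * transpose_mat A \<in> carrier_mat m m" using A by simp
  let ?P = "{p. p permutes {0..<m}}"
  let ?G = "{0..<m} \<rightarrow>\<^sub>E {0..<N}"
  have "det (A * transpose_mat A) = (\<Sum>p\<in>?P. signof p * (\<Prod>i=0..<m. (A * transpose_mat A) $$ (i, p i)))"
    by (rule det_def'[OF AA])
  also have "\<dots> = (\<Sum>p\<in>?P. signof p * (\<Sum>g\<in>?G. (\<Prod>i=0..<m. A$$(i,g i)) * (\<Prod>i=0..<m. A$$(p i, g i))))"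
  proof (intro sum.cong refl arg_cong2[where f="(*)"])
    fix p assume p: "p \<in> ?P"
    have pi: "p i < m" if "i < m" for i using p that permutes_in_image by fastforce
    have "(\<Prod>i=0..<m. (A * transpose_mat A) $$ (i, p i)) = (\<Prod>i=0..<m. \<Sum>k\<in>{0..<N}. A$$(i,k) * A$$(p i,k))"
      by (intro prod.cong refl) (use AAT_entry[OF A] pi in auto)
    also have "\<dots> = (\<Sum>g\<in>?G. \<Prod>i=0..<m. A$$(i,g i) * A$$(p i, g i))"
      by (rule prod_sum_PiE) auto
    also have "\<dots> = (\<Sum>g\<in>?G. (\<Prod>i=0..<m. A$$(i,g i)) * (\<Prod>i=0..<m. A$$(p i, g i)))"
      by (simp add: prod.distrib)
    finally show "(\<Prod>i=0..<m. (A * transpose_mat A) $$ (i, p i)) = \<dots>" .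
  qed
  also have "\<dots> = (\<Sum>p\<in>?P. \<Sum>g\<in>?G. (\<Prod>i=0..<m. A$$(i,g i)) * (signof p * (\<Prod>i=0..<m. A$$(p i, g i))))"
    by (simp add: sum_distrib_left mult.left_commute)
  also have "\<dots> = (\<Sum>g\<in>?G. \<Sum>p\<in>?P. (\<Prod>i=0..<m. A$$(i,g i)) * (signof p * (\<Prod>i=0..<m. A$$(p i, g i))))"
    by (rule sum.swap)
  also have "\<dots> = (\<Sum>g\<in>?G. (\<Prod>i=0..<m. A$$(i,g i)) * det (colsel m A g))"
    by (simp add: sum_distrib_left det_colsel_transpose_sum)
  finally show ?thesis .
qed


lemma colsel_perm:
  fixes A :: "'a::comm_ring_1 mat"
  assumes p: "p permutes {0..<m}"
  shows "det (colsel m A (g \<circ> p)) = signof p * det (colsel m A g)"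
proof -
  let ?C = "colsel m A g"
  have C: "transpose_mat ?C \<in> carrier_mat m m" unfolding colsel_def by simp
  have pm: "p i < m" if "i < m" for i using permutes_in_image[OF p] that by auto
  have eq: "colsel m A (g \<circ> p) = transpose_mat (mat m m (\<lambda>(i,j). transpose_mat ?C $$ (p i, j)))"
    by (rule eq_matI) (auto simp: colsel_def pm)
  have "det (colsel m A (g \<circ> p)) = det (mat m m (\<lambda>(i,j). transpose_mat ?C $$ (p i, j)))"
    unfolding eq by (rule det_transpose[of _ m]) simp
  also have "\<dots> = signof p * det (transpose_mat ?C)" by (rule det_permute_rows[OF C p])
  also have "det (transpose_mat ?C) = det ?C" by (rule det_transpose[of _ m]) (simp add: colsel_def)
  finally show ?thesis .
qed

lemma colsel_noninj:
  fixes A :: "'a::comm_ring_1 mat"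
  assumes "\<not> inj_on g {0..<m}"
  shows "det (colsel m A g) = 0"
proof -
  from assms obtain i j where ij: "i \<in> {0..<m}" "j \<in> {0..<m}" "g i = g j" "i \<noteq> j"
    unfolding inj_on_def by blast
  show ?thesis
    by (rule det_identical_columns[of _ m i j]) (use ij in \<open>auto simp: colsel_def intro!: eq_vecI\<close>)
qed

lemma cb_group_one:
  fixes A :: "'a::comm_ring_1 mat"
  assumes g0: "bij_betw g0 {0..<m} S" and g0r: "\<And>i. i \<notin> {0..<m} \<Longrightarrow> g0 i = undefined"
    and SN: "S \<subseteq> {0..<N}"
  shows "(\<Sum>g\<in>{g \<in> {0..<m} \<rightarrow>\<^sub>E {0..<N}. inj_on g {0..<m} \<and> g ` {0..<m} = S}.
      (\<Prod>i=0..<m. A$$(i,g i)) * det (colsel m A g)) = det (colsel m A g0)^2"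
proof -
  let ?P = "{p. p permutes {0..<m}}"
  let ?T = "{g \<in> {0..<m} \<rightarrow>\<^sub>E {0..<N}. inj_on g {0..<m} \<and> g ` {0..<m} = S}"
  have ig0: "inj_on g0 {0..<m}" and ig0S: "g0 ` {0..<m} = S" using g0 unfolding bij_betw_def by auto
  define f' where "f' g = (\<lambda>i. if i < m then the_inv_into {0..<m} g0 (g i) else i)" for g :: "nat \<Rightarrow> nat"
  have bij: "bij_betw (\<lambda>p. g0 \<circ> p) ?P ?T"
  proof (rule bij_betw_byWitness[where f'=f'])
    show "\<forall>p\<in>?P. f' (g0 \<circ> p) = p"
    proof
      fix p assume p: "p \<in> ?P"
      then have pp: "p permutes {0..<m}" by simp
      show "f' (g0 \<circ> p) = p"
      proof
        fix i show "f' (g0 \<circ> p) i = p i"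
        proof (cases "i < m")
          case True
          then have "p i \<in> {0..<m}" using permutes_in_image[OF pp] by auto
          then show ?thesis using True the_inv_into_f_f[OF ig0] unfolding f'_def by simp
        next
          case False then show ?thesis unfolding f'_def using permutes_not_in[OF pp] by auto
        qed
      qed
    qed
  next
    show "\<forall>g\<in>?T. g0 \<circ> f' g = g"
    proof
      fix g assume g: "g \<in> ?T"
      show "g0 \<circ> f' g = g"
      proof
        fix i show "(g0 \<circ> f' g) i = g i"
        proof (cases "i < m")
          case True
          then have "g i \<in> g0 ` {0..<m}" using g ig0S by auto
          then show ?thesis using True f_the_inv_into_f[OF ig0] unfolding f'_def by simp
        next
          case False
          then have "g i = undefined" using g by (auto simp: PiE_def extensional_def)
          then show ?thesis using False g0r unfolding f'_def by simp
        qed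
      qed
    qed
  next
    show "(\<lambda>p. g0 \<circ> p) ` ?P \<subseteq> ?T"
    proof
      fix g assume "g \<in> (\<lambda>p. g0 \<circ> p) ` ?P"
      then obtain p where pp: "p permutes {0..<m}" and gp: "g = g0 \<circ> p" by auto
      have im: "p ` {0..<m} = {0..<m}" by (rule permutes_image[OF pp])
      have "g ` {0..<m} = S" unfolding gp image_comp[symmetric] im by (rule ig0S)
      moreover have "inj_on g {0..<m}" unfolding gp
        by (rule comp_inj_on[OF permutes_inj_on[OF pp]]) (simp add: im ig0)
      moreover have "g \<in> {0..<m} \<rightarrow>\<^sub>E {0..<N}"
      proof
        fix i assume "i \<in> {0..<m}"
        then have "g i \<in> S" using \<open>g ` {0..<m} = S\<close> by auto
        then show "g i \<in> {0..<N}" using SN by auto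
      next
        fix i assume "i \<notin> {0..<m}"
        then show "g i = undefined" unfolding gp using permutes_not_in[OF pp] g0r by simp
      qed
      ultimately show "g \<in> ?T" by simp
    qed
  next
    show "f' ` ?T \<subseteq> ?P"
    proof
      fix q assume "q \<in> f' ` ?T"
      then obtain g where g: "g \<in> ?T" and q: "q = f' g" by auto
      have bg: "bij_betw g {0..<m} S" using g unfolding bij_betw_def by auto
      have binv: "bij_betw (the_inv_into {0..<m} g0) S {0..<m}" by (rule bij_betw_the_inv_into[OF g0])
      have "bij_betw (the_inv_into {0..<m} g0 \<circ> g) {0..<m} {0..<m}" by (rule bij_betw_trans[OF bg binv])
      then have "bij_betw q {0..<m} {0..<m}"
        by (rule bij_betw_cong[THEN iffD1, rotated]) (auto simp: q f'_def)
      moreover have "q x = x" if "x \<notin> {0..<m}" for x using that unfolding q f'_def by auto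
      ultimately have "q permutes {0..<m}" by (rule bij_imp_permutes)
      then show "q \<in> ?P" by simp
    qed
  qed
  let ?F = "\<lambda>g. (\<Prod>i=0..<m. A$$(i,g i)) * det (colsel m A g)"
  have "(\<Sum>g\<in>?T. ?F g) = (\<Sum>p\<in>?P. ?F (g0 \<circ> p))"
    by (rule sum.reindex_bij_betw[OF bij, symmetric])
  also have "\<dots> = (\<Sum>p\<in>?P. det (colsel m A g0) * (signof p * (\<Prod>i=0..<m. colsel m A g0 $$ (i, p i))))"
  proof (intro sum.cong refl)
    fix p assume p: "p \<in> ?P"
    then have pp: "p permutes {0..<m}" by simp
    have "(\<Prod>i=0..<m. A$$(i,(g0 \<circ> p) i)) = (\<Prod>i=0..<m. colsel m A g0 $$ (i, p i))"
    proof (intro prod.cong refl)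
      fix i assume "i \<in> {0..<m}"
      then have "p i < m" using permutes_in_image[OF pp] by auto
      then show "A$$(i,(g0 \<circ> p) i) = colsel m A g0 $$ (i, p i)" using \<open>i \<in> {0..<m}\<close> by (simp add: colsel_def)
    qed
    then show "?F (g0 \<circ> p) = det (colsel m A g0) * (signof p * (\<Prod>i=0..<m. colsel m A g0 $$ (i, p i)))"
      using colsel_perm[OF pp, of A g0] by (simp add: ac_simps)
  qed
  also have "\<dots> = det (colsel m A g0) * det (colsel m A g0)"
    by (simp add: sum_distrib_left[symmetric] det_def'[of _ m] colsel_def)
  finally show ?thesis by (simp add: power2_eq_square)
qed

lemma cb:
  fixes A :: "'a::comm_ring_1 mat"
  assumes A: "A \<in> carrier_mat m N"
  shows "\<exists>G. (\<forall>S\<in>{S. S \<subseteq> {0..<N} \<and> card S = m}. bij_betw (G S) {0..<m} S) \<and>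
    det (A * transpose_mat A) = (\<Sum>S\<in>{S. S \<subseteq> {0..<N} \<and> card S = m}. det (colsel m A (G S))^2)"
proof -
  let ?G = "{0..<m} \<rightarrow>\<^sub>E {0..<N}"
  let ?GI = "{g \<in> ?G. inj_on g {0..<m}}"
  let ?SS = "{S. S \<subseteq> {0..<N} \<and> card S = m}"
  let ?F = "\<lambda>g. (\<Prod>i=0..<m. A$$(i,g i)) * det (colsel m A g)"
  define G :: "nat set \<Rightarrow> nat \<Rightarrow> nat" where "G S = restrict (SOME f. bij_betw f {0..<m} S) {0..<m}" for S
  have GS: "bij_betw (G S) {0..<m} S \<and> (\<forall>i. i \<notin> {0..<m} \<longrightarrow> G S i = undefined)" if S: "S \<in> ?SS" for S
  proof -
    have fin: "finite S" using S finite_subset by auto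
    obtain h where "bij_betw h {0..<card S} S" using ex_bij_betw_nat_finite[OF fin] by blast
    then have "\<exists>f. bij_betw f {0..<m} S" using S by auto
    then have "bij_betw (SOME f. bij_betw f {0..<m} S) {0..<m} S" by (rule someI_ex)
    then have "bij_betw (G S) {0..<m} S" unfolding G_def by (rule bij_betw_cong[THEN iffD1, rotated]) auto
    then show ?thesis unfolding G_def by auto
  qed
  have finG: "finite ?G" by (intro finite_PiE) auto
  have "det (A * transpose_mat A) = (\<Sum>g\<in>?G. ?F g)" by (rule det_AAT_expand[OF A])
  also have "\<dots> = (\<Sum>g\<in>?GI. ?F g)"
    by (rule sum.mono_neutral_right[OF finG]) (auto simp: colsel_noninj)
  also have "\<dots> = (\<Sum>S\<in>?SS. \<Sum>g\<in>{g \<in> ?GI. g ` {0..<m} = S}. ?F g)"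
  proof (rule sum.group[symmetric])
    show "finite ?GI" using finG by simp
    show "finite ?SS" by (rule finite_subset[of _ "Pow {0..<N}"]) auto
    show "(\<lambda>g. g ` {0..<m}) ` ?GI \<subseteq> ?SS"
    proof
      fix S assume "S \<in> (\<lambda>g. g ` {0..<m}) ` ?GI"
      then obtain g where g: "g \<in> ?GI" and S: "S = g ` {0..<m}" by auto
      have "S \<subseteq> {0..<N}" using g S by auto
      moreover have "card S = m" using g S card_image by fastforce
      ultimately show "S \<in> ?SS" by simp
    qed
  qed
  also have "\<dots> = (\<Sum>S\<in>?SS. det (colsel m A (G S))^2)"
  proof (intro sum.cong refl)
    fix S assume S: "S \<in> ?SS"
    have eq: "{g \<in> ?GI. g ` {0..<m} = S} = {g \<in> ?G. inj_on g {0..<m} \<and> g ` {0..<m} = S}" by auto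
    show "(\<Sum>g\<in>{g \<in> ?GI. g ` {0..<m} = S}. ?F g) = det (colsel m A (G S))^2"
      unfolding eq by (rule cb_group_one) (use GS[OF S] S in auto)
  qed
  finally show ?thesis using GS by blast
qed


lemma sum_if_eq: "(i::nat) < n \<Longrightarrow> (\<Sum>k\<in>{0..<n}. if k = i then f k else 0) = (f i :: real)"
  by (subst sum.remove[of _ i]) auto

lemma det_plus_J:
  fixes L :: "real mat"
  assumes L: "L \<in> carrier_mat (Suc r) (Suc r)"
   and rows: "\<And>i. i < Suc r \<Longrightarrow> (\<Sum>j\<in>{0..<Suc r}. L$$(i,j)) = 0"
   and cols: "\<And>j. j < Suc r \<Longrightarrow> (\<Sum>i\<in>{0..<Suc r}. L$$(i,j)) = 0"
  shows "det (mat (Suc r) (Suc r) (\<lambda>(i,j). L$$(i,j) + 1)) = real (Suc r)^2 * det (mat r r (\<lambda>(i,j). L$$(i,j)))"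
proof -
  define n where "n = Suc r"
  define M where "M = mat n n (\<lambda>(i,j). L$$(i,j) + 1)"
  define P where "P = mat n n (\<lambda>(i,j). if i = r then 1 else if i = j then (1::real) else 0)"
  define R where "R = mat n n (\<lambda>(i,j). if i = j then 1 else if j = r then - (1 / real n) else (0::real))"
  define Y where "Y = mat n n (\<lambda>(i,j). if i < r \<and> j < r then L$$(i,j) + 1 else if i < r \<or> j < r then real n else real n * real n)"
  define X where "X = mat n n (\<lambda>(i,j). if i < r then (if j < r then L$$(i,j) else 0) else (if j < r then real n else real n * real n))"
  have nr: "n = Suc r" by (simp add: n_def)
  have Mc: "M \<in> carrier_mat n n" and Pc: "P \<in> carrier_mat n n" and Rc: "R \<in> carrier_mat n n"
    and Yc: "Y \<in> carrier_mat n n" and Xc: "X \<in> carrier_mat n n"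
    unfolding M_def P_def R_def Y_def X_def by auto
  have colM: "(\<Sum>k\<in>{0..<n}. M$$(k,j)) = real n" if j: "j < n" for j
  proof -
    have "(\<Sum>k\<in>{0..<n}. M$$(k,j)) = (\<Sum>k\<in>{0..<n}. L$$(k,j)) + (\<Sum>k\<in>{0..<n}. 1)"
      unfolding M_def using j by (simp add: sum.distrib)
    then show ?thesis using cols[of j] j nr by simp
  qed
  have rowM: "(\<Sum>k\<in>{0..<n}. M$$(i,k)) = real n" if i: "i < n" for i
  proof -
    have "(\<Sum>k\<in>{0..<n}. M$$(i,k)) = (\<Sum>k\<in>{0..<n}. L$$(i,k)) + (\<Sum>k\<in>{0..<n}. 1)"
      unfolding M_def using i by (simp add: sum.distrib)
    then show ?thesis using rows[of i] i nr by simp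
  qed
  have PM: "(P * M) $$ (i,j) = (if i = r then real n else M$$(i,j))" if i: "i < n" and j: "j < n" for i j
  proof -
    have "(P * M) $$ (i,j) = (\<Sum>k\<in>{0..<n}. P$$(i,k) * M$$(k,j))"
      using Pc Mc i j by (simp add: scalar_prod_def)
    also have "\<dots> = (if i = r then real n else M$$(i,j))"
    proof (cases "i = r")
      case True
      then have "(\<Sum>k\<in>{0..<n}. P$$(i,k) * M$$(k,j)) = (\<Sum>k\<in>{0..<n}. M$$(k,j))"
        unfolding P_def using i by (intro sum.cong) auto
      then show ?thesis using True colM[OF j] by simp
    next
      case False
      then have "(\<Sum>k\<in>{0..<n}. P$$(i,k) * M$$(k,j)) = (\<Sum>k\<in>{0..<n}. if k = i then M$$(k,j) else 0)"
        unfolding P_def using i by (intro sum.cong) auto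
      then show ?thesis using False sum_if_eq[OF i, of "\<lambda>k. M$$(k,j)"] by simp
    qed
    finally show ?thesis .
  qed
  have PMc: "P * M \<in> carrier_mat n n" using Pc Mc by simp
  have Yeq: "P * M * transpose_mat P = Y"
  proof (rule eq_matI)
    fix i j assume i: "i < dim_row Y" and j: "j < dim_col Y"
    then have i: "i < n" and j: "j < n" using Yc by auto
    have "(P * M * transpose_mat P) $$ (i,j) = (\<Sum>k\<in>{0..<n}. (P*M)$$(i,k) * P$$(j,k))"
      using PMc Pc i j by (auto simp: scalar_prod_def intro!: sum.cong)
    also have "\<dots> = (if j = r then (\<Sum>k\<in>{0..<n}. (P*M)$$(i,k)) else (P*M)$$(i,j))"
    proof (cases "j = r")
      case True
      then show ?thesis unfolding P_def using j by (auto intro!: sum.cong)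
    next
      case False
      then have "(\<Sum>k\<in>{0..<n}. (P*M)$$(i,k) * P$$(j,k)) = (\<Sum>k\<in>{0..<n}. if k = j then (P*M)$$(i,k) else 0)"
        unfolding P_def using j by (intro sum.cong) auto
      then show ?thesis using False sum_if_eq[OF j, of "\<lambda>k. (P*M)$$(i,k)"] by simp
    qed
    also have "\<dots> = Y $$ (i,j)"
    proof (cases "j = r")
      case True
      have "(\<Sum>k\<in>{0..<n}. (P*M)$$(i,k)) = (if i = r then real n * real n else real n)"
      proof (cases "i = r")
        case True
        then have "(\<Sum>k\<in>{0..<n}. (P*M)$$(i,k)) = (\<Sum>k\<in>{0..<n}. real n)" using PM i by (intro sum.cong) auto
        then show ?thesis using True by simp
      next
        case False
        then have "(\<Sum>k\<in>{0..<n}. (P*M)$$(i,k)) = (\<Sum>k\<in>{0..<n}. M$$(i,k))" using PM i by (intro sum.cong) auto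
        then show ?thesis using False rowM[OF i] by simp
      qed
      then show ?thesis using True i j nr unfolding Y_def by auto
    next
      case False
      then show ?thesis using PM[OF i j] i j nr unfolding Y_def M_def by auto
    qed
    finally show "(P * M * transpose_mat P) $$ (i,j) = Y $$ (i,j)" .
  qed (use Yc PMc Pc in auto)
  have Xeq: "R * Y = X"
  proof (rule eq_matI)
    fix i j assume i: "i < dim_row X" and j: "j < dim_col X"
    then have i: "i < n" and j: "j < n" using Xc by auto
    have "(R * Y) $$ (i,j) = (\<Sum>k\<in>{0..<n}. R$$(i,k) * Y$$(k,j))"
      using Rc Yc i j by (simp add: scalar_prod_def)
    also have "\<dots> = (\<Sum>k\<in>{0..<n}. (if k = i then Y$$(k,j) else 0) + (if k = r \<and> i \<noteq> r then - (1 / real n) * Y$$(k,j) else 0))"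
      unfolding R_def using i by (intro sum.cong) auto
    also have "\<dots> = Y$$(i,j) + (if i \<noteq> r then - (1 / real n) * Y$$(r,j) else 0)"
      using i nr by (simp add: sum.distrib)
    also have "\<dots> = X $$ (i,j)"
      using i j nr unfolding X_def Y_def by (auto simp: field_simps)
    finally show "(R * Y) $$ (i,j) = X $$ (i,j)" .
  qed (use Xc Rc Yc in auto)
  have dP: "det P = 1"
  proof -
    have "det P = prod_list (diag_mat P)"
      by (rule det_lower_triangular[OF _ Pc]) (auto simp: P_def nr)
    also have "\<dots> = (\<Prod>i=0..<n. P$$(i,i))" using prod_list_diag_prod[of P] Pc by simp
    also have "\<dots> = 1" by (rule prod.neutral) (auto simp: P_def)
    finally show ?thesis .
  qed
  have dR: "det R = 1"
  proof -
    have "det R = prod_list (diag_mat R)"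
      by (rule det_upper_triangular[OF _ Rc]) (auto simp: R_def nr)
    also have "\<dots> = (\<Prod>i=0..<n. R$$(i,i))" using prod_list_diag_prod[of R] Rc by simp
    also have "\<dots> = 1" by (rule prod.neutral) (auto simp: R_def)
    finally show ?thesis .
  qed
  have dY: "det Y = det M"
  proof -
    have "det Y = det (P * M) * det (transpose_mat P)" unfolding Yeq[symmetric]
      by (rule det_mult[OF PMc]) (use Pc in simp)
    also have "\<dots> = det M" using det_mult[OF Pc Mc] det_transpose[OF Pc] dP by simp
    finally show ?thesis .
  qed
  have dX: "det X = det M" unfolding Xeq[symmetric] using det_mult[OF Rc Yc] dR dY by simp
  have rn: "r < n" using nr by simp
  have "det X = (\<Sum>i<n. X $$ (i,r) * cofactor X i r)" by (rule laplace_expansion_column[OF Xc rn])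
  also have "\<dots> = X $$ (r,r) * cofactor X r r + (\<Sum>i\<in>{..<n}-{r}. X $$ (i,r) * cofactor X i r)"
    by (rule sum.remove) (use rn in auto)
  also have "(\<Sum>i\<in>{..<n}-{r}. X $$ (i,r) * cofactor X i r) = 0"
    by (intro sum.neutral ballI) (auto simp: X_def nr)
  also have "cofactor X r r = det (mat r r (\<lambda>(i,j). L$$(i,j)))"
  proof -
    have "mat_delete X r r = mat r r (\<lambda>(i,j). L$$(i,j))"
      by (rule eq_matI) (auto simp: mat_delete_def X_def nr)
    then show ?thesis unfolding cofactor_def by (simp add: power_add[symmetric] mult_2[symmetric])
  qed
  also have "X $$ (r,r) = real n * real n" using rn by (simp add: X_def)
  finally show ?thesis using dX unfolding M_def n_def by (simp add: power2_eq_square)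
qed


definition incv :: "nat set \<Rightarrow> nat \<Rightarrow> real" where
  "incv e i = (if i \<in> e then (if i = Min e then 1 else -1) else 0)"

definition incmat :: "nat \<Rightarrow> nat set list \<Rightarrow> real mat" where
  "incmat n es = mat (n - 1) (length es) (\<lambda>(i,k). incv (es!k) i)"

lemma edge_form:
  assumes sg: "simple_graph n H" and e: "e \<in> graph_edges n H"
  shows "\<exists>a b. a < b \<and> b < n \<and> e = {a,b} \<and> H a b \<and> H b a"
proof -
  from e obtain i j where ij: "e = {i,j}" "i < n" "j < n" "i \<noteq> j" "H i j"
    unfolding graph_edges_def by blast
  have "H j i" using sg ij unfolding simple_graph_def by blast
  show ?thesis
  proof (cases "i < j")
    case True then show ?thesis using ij \<open>H j i\<close> by blast
  next
    case False then have "j < i" using ij by simp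
    then show ?thesis using ij \<open>H j i\<close> by (intro exI[of _ j] exI[of _ i]) auto
  qed
qed

lemma incv_pair: assumes "a < b" shows "incv {a,b} i = (if i = a then 1 else if i = b then -1 else 0)"
proof -
  have "Min {a,b} = a" using assms by simp
  then show ?thesis unfolding incv_def using assms by auto
qed

lemma edge_iff:
  assumes sg: "simple_graph n H" and i: "i < n" and j: "j < n" and ij: "i \<noteq> j"
  shows "{i,j} \<in> graph_edges n H \<longleftrightarrow> H i j"
proof
  assume "H i j" then show "{i,j} \<in> graph_edges n H" using i j ij unfolding graph_edges_def by blast
next
  assume "{i,j} \<in> graph_edges n H"
  then obtain a b where ab: "{i,j} = {a,b}" "H a b" "H b a" using edge_form[OF sg] by blast
  then have "(a = i \<and> b = j) \<or> (a = j \<and> b = i)" by (auto simp: doubleton_eq_iff)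
  then show "H i j" using ab by auto
qed

lemma sum_es:
  assumes "distinct es"
  shows "(\<Sum>k\<in>{0..<length es}. f (es!k)) = (\<Sum>e\<in>set es. f e)"
proof -
  have "bij_betw ((!) es) {..<length es} (set es)" by (rule bij_betw_nth[OF assms]) auto
  then show ?thesis by (subst sum.reindex_bij_betw[symmetric]) (auto simp: lessThan_atLeast0)
qed

lemma degree_edges:
  assumes sg: "simple_graph n H" and i: "i < n"
  shows "card {e \<in> graph_edges n H. i \<in> e} = degree n H i"
proof -
  have "bij_betw (\<lambda>j. {i,j}) {j. j < n \<and> H i j} {e \<in> graph_edges n H. i \<in> e}"
  proof (rule bij_betwI')
    fix x y assume "x \<in> {j. j < n \<and> H i j}" "y \<in> {j. j < n \<and> H i j}"
    then have "x \<noteq> i" "y \<noteq> i" using sg i unfolding simple_graph_def by auto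
    then show "({i,x} = {i,y}) = (x = y)" by (auto simp: doubleton_eq_iff)
  next
    fix x assume x: "x \<in> {j. j < n \<and> H i j}"
    then have "x \<noteq> i" using sg i unfolding simple_graph_def by auto
    then show "{i,x} \<in> {e \<in> graph_edges n H. i \<in> e}" using x i unfolding graph_edges_def by blast
  next
    fix e assume e: "e \<in> {e \<in> graph_edges n H. i \<in> e}"
    then obtain a b where ab: "a < b" "b < n" "e = {a,b}" "H a b" "H b a" using edge_form[OF sg] by blast
    show "\<exists>x\<in>{j. j < n \<and> H i j}. e = {i,x}"
    proof (cases "i = a")
      case True then show ?thesis using ab by auto
    next
      case False then have "i = b" using e ab by auto
      then show ?thesis using ab by (intro bexI[of _ a]) auto
    qed
  qed
  then show ?thesis unfolding degree_def by (simp add: bij_betw_same_card)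
qed

lemma incmat_AAT:
  assumes sg: "simple_graph n H" and es: "distinct es" "set es = graph_edges n H"
  shows "incmat n es * transpose_mat (incmat n es) = mat (n-1) (n-1) (\<lambda>(i,j). laplacian n H $$ (i,j))"
proof (rule eq_matI)
  fix i j assume "i < dim_row (mat (n-1) (n-1) (\<lambda>(i,j). laplacian n H $$ (i,j)))"
    "j < dim_col (mat (n-1) (n-1) (\<lambda>(i,j). laplacian n H $$ (i,j)))"
  then have i: "i < n - 1" and j: "j < n - 1" by auto
  have "(incmat n es * transpose_mat (incmat n es)) $$ (i,j) = (\<Sum>k\<in>{0..<length es}. incv (es!k) i * incv (es!k) j)"
    using i j by (simp add: incmat_def scalar_prod_def)
  also have "\<dots> = (\<Sum>e\<in>graph_edges n H. incv e i * incv e j)"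
    using sum_es[OF es(1), of "\<lambda>e. incv e i * incv e j"] es(2) by simp
  also have "\<dots> = laplacian n H $$ (i,j)"
  proof (cases "i = j")
    case True
    have "(\<Sum>e\<in>graph_edges n H. incv e i * incv e j) = (\<Sum>e\<in>graph_edges n H. if i \<in> e then 1 else 0)"
      using True by (intro sum.cong) (auto simp: incv_def)
    also have "\<dots> = (\<Sum>e\<in>{e \<in> graph_edges n H. i \<in> e}. 1)"
      by (rule sum.inter_filter[symmetric]) (simp add: es(2)[symmetric])
    also have "\<dots> = real (card {e \<in> graph_edges n H. i \<in> e})" by simp
    also have "\<dots> = real (degree n H i)" using degree_edges[OF sg, of i] i by simp
    also have "\<dots> = laplacian n H $$ (i,j)" using True i sg
      by (simp add: laplacian_def degree_mat_def adjacency_mat_def simple_graph_def)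
    finally show ?thesis .
  next
    case False
    have fin: "finite (graph_edges n H)" unfolding es(2)[symmetric] by simp
    have "(\<Sum>e\<in>graph_edges n H. incv e i * incv e j) = (\<Sum>e\<in>graph_edges n H. if e = {i,j} then -1 else 0)"
    proof (intro sum.cong refl)
      fix e assume e: "e \<in> graph_edges n H"
      then obtain a b where ab: "a < b" "b < n" "e = {a,b}" using edge_form[OF sg] by blast
      show "incv e i * incv e j = (if e = {i,j} then -1 else 0)"
        using ab False by (auto simp: incv_pair doubleton_eq_iff)
    qed
    also have "\<dots> = (if {i,j} \<in> graph_edges n H then -1 else 0)"
      using fin by (simp add: sum.delta)
    also have "\<dots> = (if H i j then -1 else 0)" using edge_iff[OF sg, of i j] i j False by simp
    also have "\<dots> = laplacian n H $$ (i,j)" using False i j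
      by (simp add: laplacian_def degree_mat_def adjacency_mat_def)
    finally show ?thesis .
  qed
  finally show "(incmat n es * transpose_mat (incmat n es)) $$ (i,j) = mat (n-1) (n-1) (\<lambda>(i,j). laplacian n H $$ (i,j)) $$ (i,j)"
    using i j by simp
qed (auto simp: incmat_def)


lemma rtc_sym: assumes "\<And>x y. R x y \<Longrightarrow> R y x" and "R\<^sup>*\<^sup>* x y" shows "R\<^sup>*\<^sup>* y x"
  using assms(2)
proof (induct rule: rtranclp_induct)
  case base then show ?case by simp
next
  case (step y z)
  have "R z y" using assms(1)[OF step(2)] .
  then show ?case using step(3) by (rule converse_rtranclp_into_rtranclp)
qed

lemma rtc_const: assumes "\<And>x y. R x y \<Longrightarrow> f x = f y" and "R\<^sup>*\<^sup>* x y" shows "f x = f y"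
  using assms(2)
proof (induct rule: rtranclp_induct)
  case base then show ?case by simp
next
  case (step y z)
  have "f y = f z" by (rule assms(1)[OF step(2)])
  then show ?case using step(3) by simp
qed

lemma colsel_inc:
  assumes g: "\<And>j. j < n - 1 \<Longrightarrow> g j < length es" and i: "i < n - 1" and j: "j < n - 1"
  shows "colsel (n-1) (incmat n es) g $$ (i,j) = incv (es ! g j) i"
  using g[OF j] i j by (simp add: colsel_def incmat_def)

lemma colsel_tu:
  assumes sg: "simple_graph n H" and es: "set es = graph_edges n H"
    and g: "\<And>j. j < n - 1 \<Longrightarrow> g j < length es"
  shows "tu_ok (n-1) (colsel (n-1) (incmat n es) g)"
  unfolding tu_ok_def
proof (intro conjI allI impI)
  show "colsel (n-1) (incmat n es) g \<in> carrier_mat (n-1) (n-1)" by (simp add: colsel_def)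
next
  fix i j assume i: "i < n-1" and j: "j < n-1"
  show "colsel (n-1) (incmat n es) g $$ (i,j) \<in> {-1,0,1}"
  proof -
    have X: "colsel (n-1) (incmat n es) g $$ (i,j) = incv (es ! g j) i" by (rule colsel_inc[OF g i j])
    show ?thesis unfolding X incv_def by auto
  qed
next
  fix i1 i2 j assume i: "i1 < n-1" "i2 < n-1" and j: "j < n-1"
    and h: "colsel (n-1) (incmat n es) g $$ (i1,j) = 1" "colsel (n-1) (incmat n es) g $$ (i2,j) = 1"
  have "incv (es ! g j) i1 = 1" "incv (es ! g j) i2 = 1"
  proof -
    have X1: "colsel (n-1) (incmat n es) g $$ (i1,j) = incv (es ! g j) i1" by (rule colsel_inc[OF g i(1) j])
    have X2: "colsel (n-1) (incmat n es) g $$ (i2,j) = incv (es ! g j) i2" by (rule colsel_inc[OF g i(2) j])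
    show "incv (es ! g j) i1 = 1" "incv (es ! g j) i2 = 1" using h unfolding X1 X2 by auto
  qed
  then have "i1 = Min (es ! g j)" "i2 = Min (es ! g j)" unfolding incv_def
    by (smt (verit, ccfv_SIG))+
  then show "i1 = i2" by simp
next
  fix i1 i2 j assume i: "i1 < n-1" "i2 < n-1" and j: "j < n-1"
    and h: "colsel (n-1) (incmat n es) g $$ (i1,j) = -1" "colsel (n-1) (incmat n es) g $$ (i2,j) = -1"
  have "es ! g j \<in> graph_edges n H" using g[OF j] es nth_mem by blast
  then obtain a b where ab: "a < b" "es ! g j = {a,b}" using edge_form[OF sg] by blast
  have "incv {a,b} i1 = -1" "incv {a,b} i2 = -1"
  proof -
    have X1: "colsel (n-1) (incmat n es) g $$ (i1,j) = incv (es ! g j) i1" by (rule colsel_inc[OF g i(1) j])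
    have X2: "colsel (n-1) (incmat n es) g $$ (i2,j) = incv (es ! g j) i2" by (rule colsel_inc[OF g i(2) j])
    show "incv {a,b} i1 = -1" "incv {a,b} i2 = -1" using h unfolding X1 X2 ab(2) by auto
  qed
  then have "i1 = b" "i2 = b" unfolding incv_pair[OF ab(1)] by (smt (verit))+
  then show "i1 = i2" by simp
qed

definition extv :: "nat \<Rightarrow> real vec \<Rightarrow> nat \<Rightarrow> real" where
  "extv m v u = (if u < m then v $ u else 0)"

lemma kernel_entry:
  assumes g: "\<And>j. j < n - 1 \<Longrightarrow> g j < length es" and j: "j < n - 1" and ab: "a < b" "es ! g j = {a,b}"
    and v: "v \<in> carrier_vec (n-1)"
  shows "(transpose_mat (colsel (n-1) (incmat n es) g) *\<^sub>v v) $ j = extv (n-1) v a - extv (n-1) v b"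
proof -
  have "(transpose_mat (colsel (n-1) (incmat n es) g) *\<^sub>v v) $ j
      = (\<Sum>i\<in>{0..<n-1}. colsel (n-1) (incmat n es) g $$ (i,j) * v $ i)"
    using j v by (simp add: scalar_prod_def colsel_def)
  also have "\<dots> = (\<Sum>i\<in>{0..<n-1}. (if i = a then v $ i else 0) - (if i = b then v $ i else 0))"
  proof (intro sum.cong refl)
    fix i assume "i \<in> {0..<n-1}"
    then have i: "i < n - 1" by simp
    show "colsel (n-1) (incmat n es) g $$ (i,j) * v $ i = (if i = a then v $ i else 0) - (if i = b then v $ i else 0)"
    proof -
      have X: "colsel (n-1) (incmat n es) g $$ (i,j) = incv (es ! g j) i" by (rule colsel_inc[OF g i j])
      show ?thesis unfolding X ab(2) incv_pair[OF ab(1)] using ab(1) by simp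
    qed
  qed
  also have "\<dots> = extv (n-1) v a - extv (n-1) v b"
    by (simp add: sum_subtractf sum.delta extv_def)
  finally show ?thesis .
qed

lemma det_colsel_tree:
  assumes sg: "simple_graph n H" and n: "1 \<le> n" and es: "distinct es" "set es = graph_edges n H"
    and g: "bij_betw g {0..<n-1} S" and S: "S \<subseteq> {0..<length es}"
  shows "det (colsel (n-1) (incmat n es) g) \<noteq> 0 \<longleftrightarrow> edges_connected n ((!) es ` S)"
proof -
  define m where "m = n - 1"
  define C where "C = colsel m (incmat n es) g"
  define T where "T = (!) es ` S"
  define R where "R = (\<lambda>a b. {a,b} \<in> T)"
  have gl: "g j < length es" if j: "j < n - 1" for j
  proof -
    have "g j \<in> g ` {0..<n-1}" using j by simp
    then have "g j \<in> S" using g unfolding bij_betw_def by simp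
    then show ?thesis using S by auto
  qed
  have gS: "g ` {0..<m} = S" using g unfolding bij_betw_def m_def by auto
  have Cc: "C \<in> carrier_mat m m" unfolding C_def by (simp add: colsel_def)
  have CT: "transpose_mat C \<in> carrier_mat m m" using Cc by simp
  have Rsym: "R x y \<Longrightarrow> R y x" for x y unfolding R_def by (simp add: insert_commute)
  have Rn: "a < n \<and> b < n" if Rab: "R a b" for a b
  proof -
    have "{a,b} \<in> set es" using Rab S unfolding R_def T_def by auto
    then have "{a,b} \<in> graph_edges n H" using es(2) by simp
    then obtain x y where xy: "x < y" "y < n" "{a,b} = {x,y}" using edge_form[OF sg] by blast
    then show ?thesis by (auto simp: doubleton_eq_iff)
  qed
  have ker: "transpose_mat C *\<^sub>v v = 0\<^sub>v m \<longleftrightarrow> (\<forall>x y. R x y \<longrightarrow> extv m v x = extv m v y)"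
    if v: "v \<in> carrier_vec m" for v
  proof
    assume z: "transpose_mat C *\<^sub>v v = 0\<^sub>v m"
    show "\<forall>x y. R x y \<longrightarrow> extv m v x = extv m v y"
    proof (intro allI impI)
      fix x y assume "R x y"
      then obtain j where j: "j < m" and ej: "es ! g j = {x,y}" unfolding R_def T_def using gS by auto
      have "es ! g j \<in> graph_edges n H" using gl[of j] j es(2) nth_mem unfolding m_def by blast
      then obtain a b where ab: "a < b" "es ! g j = {a,b}" using edge_form[OF sg] by blast
      have "(transpose_mat C *\<^sub>v v) $ j = 0" using z j by simp
      then have "extv m v a = extv m v b" using kernel_entry[of n g es j a b v, OF gl _ ab] j v unfolding C_def m_def by simp
      then show "extv m v x = extv m v y" using ab ej by (auto simp: doubleton_eq_iff)
    qed
  next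
    assume h: "\<forall>x y. R x y \<longrightarrow> extv m v x = extv m v y"
    show "transpose_mat C *\<^sub>v v = 0\<^sub>v m"
    proof (rule eq_vecI)
      fix j assume "j < dim_vec (0\<^sub>v m :: real vec)"
      then have j: "j < m" by simp
      have "es ! g j \<in> graph_edges n H" using gl[of j] j es(2) nth_mem unfolding m_def by blast
      then obtain a b where ab: "a < b" "es ! g j = {a,b}" using edge_form[OF sg] by blast
      have "R a b" unfolding R_def T_def using ab(2)[symmetric] gS j by auto
      then have "extv m v a = extv m v b" using h by blast
      then show "(transpose_mat C *\<^sub>v v) $ j = 0\<^sub>v m $ j"
        using kernel_entry[of n g es j a b v, OF gl _ ab] j v unfolding C_def m_def by simp
    qed (use Cc in simp)
  qed
  have detiff: "det C = 0 \<longleftrightarrow> (\<exists>v. v \<in> carrier_vec m \<and> v \<noteq> 0\<^sub>v m \<and> (\<forall>x y. R x y \<longrightarrow> extv m v x = extv m v y))"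
  proof -
    have "det C = det (transpose_mat C)" using det_transpose[OF Cc] by simp
    then have "det C = 0 \<longleftrightarrow> (\<exists>v. v \<in> carrier_vec m \<and> v \<noteq> 0\<^sub>v m \<and> transpose_mat C *\<^sub>v v = 0\<^sub>v m)"
      using det_0_iff_vec_prod_zero_field[OF CT] by simp
    then show ?thesis using ker by blast
  qed
  have "det C \<noteq> 0 \<longleftrightarrow> edges_connected n T"
  proof
    assume d: "det C \<noteq> 0"
    show "edges_connected n T"
    proof (rule ccontr)
      assume nc: "\<not> edges_connected n T"
      then obtain u w where uw: "u < n" "w < n" "\<not> R\<^sup>*\<^sup>* u w"
        unfolding edges_connected_def R_def by blast
      have "\<exists>x<n. \<not> R\<^sup>*\<^sup>* x m"
      proof (rule ccontr)
        assume "\<not> (\<exists>x<n. \<not> R\<^sup>*\<^sup>* x m)"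
        then have "R\<^sup>*\<^sup>* u m" "R\<^sup>*\<^sup>* w m" using uw by auto
        have "R\<^sup>*\<^sup>* m w" by (rule rtc_sym[of R, OF Rsym \<open>R\<^sup>*\<^sup>* w m\<close>])
        then have "R\<^sup>*\<^sup>* u w" using \<open>R\<^sup>*\<^sup>* u m\<close> by (rule rtranclp_trans[rotated])
        then show False using uw by simp
      qed
      then obtain x where x: "x < n" "\<not> R\<^sup>*\<^sup>* x m" by blast
      have "x \<noteq> m" using x(2) by auto
      then have xm: "x < m" using x(1) unfolding m_def by simp
      define v where "v = vec m (\<lambda>i. if R\<^sup>*\<^sup>* i m then 0 else (1::real))"
      have vc: "v \<in> carrier_vec m" unfolding v_def by simp
      have v0: "v \<noteq> 0\<^sub>v m"
      proof
        assume "v = 0\<^sub>v m"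
        then have "v $ x = 0" using xm by simp
        then show False using xm x unfolding v_def by simp
      qed
      have ev: "extv m v u = (if R\<^sup>*\<^sup>* u m then 0 else 1)" if u: "u < n" for u
      proof (cases "u < m")
        case True then show ?thesis unfolding extv_def v_def by simp
      next
        case False then have "u = m" using u unfolding m_def by simp
        then show ?thesis unfolding extv_def by simp
      qed
      have "\<forall>x y. R x y \<longrightarrow> extv m v x = extv m v y"
      proof (intro allI impI)
        fix a b assume "R a b"
        have "R b a" using Rsym[OF \<open>R a b\<close>] .
        have "R\<^sup>*\<^sup>* a m \<longleftrightarrow> R\<^sup>*\<^sup>* b m"
        proof
          assume "R\<^sup>*\<^sup>* a m" then show "R\<^sup>*\<^sup>* b m" by (rule converse_rtranclp_into_rtranclp[of R b a m, OF \<open>R b a\<close>])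
        next
          assume "R\<^sup>*\<^sup>* b m" then show "R\<^sup>*\<^sup>* a m" by (rule converse_rtranclp_into_rtranclp[of R a b m, OF \<open>R a b\<close>])
        qed
        moreover have "a < n" "b < n" using Rn[OF \<open>R a b\<close>] by auto
        ultimately show "extv m v a = extv m v b" using ev by simp
      qed
      then have "det C = 0" using detiff vc v0 by blast
      then show False using d by simp
    qed
  next
    assume con: "edges_connected n T"
    show "det C \<noteq> 0"
    proof
      assume "det C = 0"
      then obtain v where vc: "v \<in> carrier_vec m" and v0: "v \<noteq> 0\<^sub>v m"
        and h: "\<forall>x y. R x y \<longrightarrow> extv m v x = extv m v y" using detiff by blast
      have "v = 0\<^sub>v m"
      proof (rule eq_vecI)
        fix i assume "i < dim_vec (0\<^sub>v m :: real vec)"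
        then have i: "i < m" by simp
        have "R\<^sup>*\<^sup>* i m" using con i n unfolding edges_connected_def R_def m_def by auto
        then have "extv m v i = extv m v m" by (rule rtc_const[of R, rotated]) (use h in blast)
        then show "v $ i = 0\<^sub>v m $ i" using i unfolding extv_def by simp
      qed (use vc in simp)
      then show False using v0 by simp
    qed
  qed
  then show ?thesis unfolding C_def T_def m_def .
qed


lemma complement_simple:
  assumes "simple_graph n E" shows "simple_graph n (complement_graph E)"
  using assms unfolding simple_graph_def complement_graph_def by auto

lemma degree_le:
  assumes sg: "simple_graph n E" and i: "i < n"
  shows "degree n E i + degree n (complement_graph E) i = n - 1"
proof -
  have d: "{j. j < n \<and> E i j} \<inter> {j. j < n \<and> complement_graph E i j} = {}"
    unfolding complement_graph_def by auto
  have u: "{j. j < n \<and> E i j} \<union> {j. j < n \<and> complement_graph E i j} = {0..<n} - {i}"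
    using sg i unfolding complement_graph_def simple_graph_def by auto
  have "degree n E i + degree n (complement_graph E) i = card ({0..<n} - {i})"
    unfolding degree_def u[symmetric] by (rule card_Un_disjoint[symmetric]) (use d in auto)
  also have "\<dots> = n - 1" using i by simp
  finally show ?thesis .
qed

lemma lap_entry:
  assumes "i < n" "j < n"
  shows "laplacian n E $$ (i,j) = (if i = j then real (degree n E i) else 0) - (if E i j then 1 else 0)"
  using assms by (simp add: laplacian_def degree_mat_def adjacency_mat_def)

lemma lap_row_sum:
  assumes sg: "simple_graph n H" and i: "i < n"
  shows "(\<Sum>j\<in>{0..<n}. laplacian n H $$ (i,j)) = 0"
proof -
  have "(\<Sum>j\<in>{0..<n}. laplacian n H $$ (i,j)) =
      (\<Sum>j\<in>{0..<n}. if i = j then real (degree n H i) else 0) - (\<Sum>j\<in>{0..<n}. if H i j then 1 else 0)"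
    using i by (simp add: lap_entry sum_subtractf)
  also have "(\<Sum>j\<in>{0..<n}. if i = j then real (degree n H i) else 0) = real (degree n H i)"
    using i by simp
  also have "(\<Sum>j\<in>{0..<n}. if H i j then 1 else (0::real)) = (\<Sum>j\<in>{j\<in>{0..<n}. H i j}. 1)"
    by (rule sum.inter_filter[symmetric]) simp
  also have "\<dots> = real (degree n H i)" unfolding degree_def
    by (simp add: Collect_conj_eq Int_commute atLeast0LessThan lessThan_def)
  finally show ?thesis by simp
qed

lemma lap_sym:
  assumes sg: "simple_graph n H" and i: "i < n" and j: "j < n"
  shows "laplacian n H $$ (i,j) = laplacian n H $$ (j,i)"
  using sg i j unfolding lap_entry[OF i j] lap_entry[OF j i] simple_graph_def by auto

lemma count_trees:
  assumes sg: "simple_graph n H" and es: "distinct es" "set es = graph_edges n H"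
  shows "card {S. (S \<subseteq> {0..<length es} \<and> card S = n - 1) \<and> edges_connected n ((!) es ` S)}
     = num_spanning_trees n H"
proof -
  let ?N = "length es"
  have inj: "inj_on ((!) es) {0..<?N}" using es(1) by (simp add: inj_on_nth)
  have "bij_betw ((`) ((!) es)) {S. (S \<subseteq> {0..<?N} \<and> card S = n - 1) \<and> edges_connected n ((!) es ` S)}
      {T. spanning_tree n H T}"
  proof (rule bij_betwI')
    fix S1 S2 assume "S1 \<in> {S. (S \<subseteq> {0..<?N} \<and> card S = n - 1) \<and> edges_connected n ((!) es ` S)}"
      "S2 \<in> {S. (S \<subseteq> {0..<?N} \<and> card S = n - 1) \<and> edges_connected n ((!) es ` S)}"
    then have "S1 \<subseteq> {0..<?N}" "S2 \<subseteq> {0..<?N}" by auto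
    then show "((!) es ` S1 = (!) es ` S2) = (S1 = S2)" by (rule inj_on_image_eq_iff[OF inj])
  next
    fix S assume S: "S \<in> {S. (S \<subseteq> {0..<?N} \<and> card S = n - 1) \<and> edges_connected n ((!) es ` S)}"
    have "(!) es ` S \<subseteq> set es"
    proof
      fix t assume "t \<in> (!) es ` S"
      then obtain k where "k \<in> S" "t = es ! k" by auto
      then show "t \<in> set es" using S by auto
    qed
    then have "(!) es ` S \<subseteq> graph_edges n H" using es(2) by simp
    moreover have "card ((!) es ` S) = n - 1" using S card_image[OF inj_on_subset[OF inj]] by auto
    ultimately show "(!) es ` S \<in> {T. spanning_tree n H T}" using S unfolding spanning_tree_def by auto
  next
    fix T assume T: "T \<in> {T. spanning_tree n H T}"
    define S where "S = {k \<in> {0..<?N}. es ! k \<in> T}"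
    have TS: "(!) es ` S = T"
    proof
      show "(!) es ` S \<subseteq> T" unfolding S_def by auto
      show "T \<subseteq> (!) es ` S"
      proof
        fix t assume t: "t \<in> T"
        then have "t \<in> set es" using T es(2) unfolding spanning_tree_def by auto
        then obtain k where "k < ?N" "es ! k = t" by (auto simp: in_set_conv_nth)
        then show "t \<in> (!) es ` S" unfolding S_def using t by auto
      qed
    qed
    have SN: "S \<subseteq> {0..<?N}" unfolding S_def by auto
    have "card S = card T" using card_image[OF inj_on_subset[OF inj SN]] TS by simp
    then have "S \<in> {S. (S \<subseteq> {0..<?N} \<and> card S = n - 1) \<and> edges_connected n ((!) es ` S)}"
      using SN TS T unfolding spanning_tree_def by auto
    then show "\<exists>S\<in>{S. (S \<subseteq> {0..<?N} \<and> card S = n - 1) \<and> edges_connected n ((!) es ` S)}. T = (!) es ` S"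
      using TS by auto
  qed
  then show ?thesis unfolding num_spanning_trees_def by (rule bij_betw_same_card)
qed

lemma graph_edges_finite: "finite (graph_edges n H)"
proof (rule finite_subset[of _ "Pow {0..<n}"])
  show "graph_edges n H \<subseteq> Pow {0..<n}"
  proof
    fix e assume "e \<in> graph_edges n H"
    then obtain i j where "e = {i,j}" "i < n" "j < n" unfolding graph_edges_def by blast
    then show "e \<in> Pow {0..<n}" by auto
  qed
qed simp

lemma matrix_tree:
  assumes sg: "simple_graph n H" and n: "1 \<le> n"
  shows "det (mat (n-1) (n-1) (\<lambda>(i,j). laplacian n H $$ (i,j))) = real (num_spanning_trees n H)"
proof -
  obtain es where es: "set es = graph_edges n H" "distinct es"
    using finite_distinct_list[OF graph_edges_finite] by blast
  let ?A = "incmat n es"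
  let ?N = "length es"
  let ?SS = "{S. S \<subseteq> {0..<?N} \<and> card S = n - 1}"
  have A: "?A \<in> carrier_mat (n-1) ?N" unfolding incmat_def by simp
  obtain G where G: "\<forall>S\<in>?SS. bij_betw (G S) {0..<n-1} S"
    and cbe: "det (?A * transpose_mat ?A) = (\<Sum>S\<in>?SS. det (colsel (n-1) ?A (G S))^2)"
    using cb[OF A] by blast
  have "det (mat (n-1) (n-1) (\<lambda>(i,j). laplacian n H $$ (i,j))) = det (?A * transpose_mat ?A)"
    using incmat_AAT[OF sg es(2,1)] by simp
  also have "\<dots> = (\<Sum>S\<in>?SS. if edges_connected n ((!) es ` S) then 1 else 0)"
    unfolding cbe
  proof (intro sum.cong refl)
    fix S assume S: "S \<in> ?SS"
    have g: "bij_betw (G S) {0..<n-1} S" using G S by blast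
    have gl: "G S j < length es" if j: "j < n - 1" for j
    proof -
      have "G S j \<in> G S ` {0..<n-1}" using j by simp
      then have "G S j \<in> S" using g unfolding bij_betw_def by simp
      then show ?thesis using S by auto
    qed
    have tu: "det (colsel (n-1) ?A (G S)) \<in> {-1,0,1}"
      by (rule tu_det, rule colsel_tu[OF sg es(1) gl])
    have iff: "det (colsel (n-1) ?A (G S)) \<noteq> 0 \<longleftrightarrow> edges_connected n ((!) es ` S)"
      by (rule det_colsel_tree[OF sg n es(2,1) g]) (use S in auto)
    show "det (colsel (n-1) ?A (G S))^2 = (if edges_connected n ((!) es ` S) then 1 else 0)"
      using tu iff by auto
  qed
  also have "\<dots> = real (card {S \<in> ?SS. edges_connected n ((!) es ` S)})"
  proof -
    have fin: "finite ?SS" by (rule finite_subset[of _ "Pow {0..<?N}"]) auto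
    have "(\<Sum>S\<in>?SS. if edges_connected n ((!) es ` S) then 1 else (0::real))
        = (\<Sum>S\<in>{S \<in> ?SS. edges_connected n ((!) es ` S)}. 1)"
      by (rule sum.inter_filter[symmetric, OF fin])
    then show ?thesis by simp
  qed
  also have "{S \<in> ?SS. edges_connected n ((!) es ` S)} =
      {S. (S \<subseteq> {0..<?N} \<and> card S = n - 1) \<and> edges_connected n ((!) es ` S)}" by auto
  also have "card \<dots> = num_spanning_trees n H" by (rule count_trees[OF sg es(2,1)])
  finally show ?thesis .
qed

lemma tree_count_compl:
  assumes sg: "simple_graph n E" and n: "1 \<le> n"
  shows "det (real n \<cdot>\<^sub>m 1\<^sub>m n - laplacian n E) = real n ^ 2 * real (num_spanning_trees n (complement_graph E))"
proof -
  define H where "H = complement_graph E"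
  have sgH: "simple_graph n H" unfolding H_def by (rule complement_simple[OF sg])
  obtain r where nr: "n = Suc r" using n by (cases n) auto
  define L where "L = laplacian n H"
  have L: "L \<in> carrier_mat (Suc r) (Suc r)" unfolding L_def laplacian_def degree_mat_def adjacency_mat_def nr[symmetric]
    by (rule minus_carrier_mat) simp
  have eq: "real n \<cdot>\<^sub>m 1\<^sub>m n - laplacian n E = mat (Suc r) (Suc r) (\<lambda>(i,j). L$$(i,j) + 1)"
  proof (rule eq_matI)
    fix i j assume "i < dim_row (mat (Suc r) (Suc r) (\<lambda>(i,j). L$$(i,j) + 1))"
      "j < dim_col (mat (Suc r) (Suc r) (\<lambda>(i,j). L$$(i,j) + 1))"
    then have i: "i < n" and j: "j < n" using nr by auto
    show "(real n \<cdot>\<^sub>m 1\<^sub>m n - laplacian n E) $$ (i,j) = mat (Suc r) (Suc r) (\<lambda>(i,j). L$$(i,j) + 1) $$ (i,j)"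
    proof (cases "i = j")
      case True
      have "degree n E i + degree n H i = n - 1" using degree_le[OF sg i] unfolding H_def .
      then have "real n - real (degree n E i) = real (degree n H i) + 1" using i by linarith
      moreover have "\<not> E i i" using sg i unfolding simple_graph_def by blast
      moreover have "\<not> H i i" using sgH i unfolding simple_graph_def by blast
      ultimately show ?thesis using True i j nr unfolding L_def
        by (simp add: lap_entry laplacian_def degree_mat_def adjacency_mat_def)
    next
      case False
      then show ?thesis using i j nr unfolding L_def H_def
        by (simp add: lap_entry laplacian_def degree_mat_def adjacency_mat_def complement_graph_def)
    qed
  qed (use nr in \<open>auto simp: laplacian_def degree_mat_def adjacency_mat_def\<close>)
  have "det (mat (Suc r) (Suc r) (\<lambda>(i,j). L$$(i,j) + 1)) = real (Suc r)^2 * det (mat r r (\<lambda>(i,j). L$$(i,j)))"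
  proof (rule det_plus_J[OF L])
    fix i assume "i < Suc r" then show "(\<Sum>j\<in>{0..<Suc r}. L$$(i,j)) = 0"
      using lap_row_sum[OF sgH, of i] nr unfolding L_def by simp
  next
    fix j assume j: "j < Suc r"
    have "(\<Sum>i\<in>{0..<Suc r}. L$$(i,j)) = (\<Sum>i\<in>{0..<Suc r}. L$$(j,i))"
    proof (intro sum.cong refl)
      fix i assume "i \<in> {0..<Suc r}"
      then have "i < n" using nr by simp
      then show "L$$(i,j) = L$$(j,i)" unfolding L_def using lap_sym[OF sgH, of i j] j nr by simp
    qed
    then show "(\<Sum>i\<in>{0..<Suc r}. L$$(i,j)) = 0"
      using lap_row_sum[OF sgH, of j] nr j unfolding L_def by simp
  qed
  also have "det (mat r r (\<lambda>(i,j). L$$(i,j))) = real (num_spanning_trees n H)"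
    using matrix_tree[OF sgH n] nr unfolding L_def by simp
  finally have calc: "det (real n \<cdot>\<^sub>m 1\<^sub>m n - laplacian n E) = real (Suc r)^2 * real (num_spanning_trees n H)"
    unfolding eq .
  have rn: "real (Suc r) = real n" using nr by simp
  show ?thesis using calc unfolding rn H_def .
qed


lemma psum_scale:
  fixes c :: real
  assumes n: "0 < c"
  shows "(\<Sum>e\<leftarrow>es. e^k) = c^k * psum (map (\<lambda>e. e / c) es) k"
  unfolding psum_def using n by (induct es) (auto simp: power_divide algebra_simps)

lemma prod_scale:
  fixes c :: real
  assumes n: "0 < c"
  shows "(\<Prod>e\<leftarrow>es. c - e) = c^(length es) * (\<Prod>x\<leftarrow>map (\<lambda>e. e / c) es. 1 - x)"
proof (induct es)
  case Nil then show ?case by simp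
next
  case (Cons a es)
  have ca: "c - a = c * (1 - a / c)" using n by (simp add: field_simps)
  have "(\<Prod>e\<leftarrow>a#es. c - e) = (c - a) * (\<Prod>e\<leftarrow>es. c - e)" by simp
  also have "\<dots> = c * (1 - a / c) * (c^(length es) * (\<Prod>x\<leftarrow>map (\<lambda>e. e / c) es. 1 - x))"
    using Cons ca by simp
  also have "\<dots> = c^(length (a#es)) * (\<Prod>x\<leftarrow>map (\<lambda>e. e / c) (a#es). 1 - x)"
    by (simp add: ac_simps)
  finally show ?case .
qed

lemma mem_le_psum:
  fixes ys :: "real list"
  assumes "\<forall>y\<in>set ys. 0 \<le> y" and "x \<in> set ys"
  shows "x^k \<le> psum ys k"
  using assms unfolding psum_def
proof (induct ys)
  case Nil then show ?case by simp
next
  case (Cons a ys)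
  have nn': "0 \<le> (\<Sum>y\<leftarrow>ys. y^k)" using Cons.prems(1) by (induct ys) auto
  show ?case
  proof (cases "x = a")
    case True then show ?thesis using nn' by simp
  next
    case False
    then have "x^k \<le> (\<Sum>y\<leftarrow>ys. y^k)" using Cons by auto
    moreover have "0 \<le> a^k" using Cons.prems(1) by auto
    ultimately show ?thesis by simp
  qed
qed

lemma tb_formula:
  fixes es :: "real list"
  assumes n: "1 \<le> n" and m: "1 \<le> m"
    and tr: "\<And>k. mat_trace (laplacian n E ^\<^sub>m k) = (\<Sum>e\<leftarrow>es. e^k)"
    and nn: "\<forall>e\<in>set es. 0 \<le> e"
  shows "tree_bound n E m = real n ^ (n - 2) *
     ((1 - psum (map (\<lambda>e. e / real n) es) m powr (1 / real m)) *
      exp (- (\<Sum>k=1..<m. (psum (map (\<lambda>e. e / real n) es) k - (psum (map (\<lambda>e. e / real n) es) m powr (1 / real m))^k) / real k)))"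
proof -
  let ?xs = "map (\<lambda>e. e / real n) es"
  let ?p = "psum ?xs"
  let ?M = "?p m powr (1 / real m)"
  have c: "0 < real n" using n by simp
  have trp: "mat_trace (laplacian n E ^\<^sub>m k) = real n ^ k * ?p k" for k
    using tr psum_scale[OF c] by simp
  have pnn: "0 \<le> ?p k" for k by (rule psum_nonneg) (use nn n in auto)
  have Mnn: "0 \<le> ?M" by simp
  have r1: "(real n ^ m * ?p m) powr (1 / real m) = real n * ?M"
    using c m by (simp add: powr_mult pow_powr_root)
  have rk: "(real n ^ m * ?p m) powr (real k / real m) = real n ^ k * ?M ^ k" if k: "1 \<le> k" for k
  proof -
    have "(real n ^ m * ?p m) powr (real k / real m) = ((real n ^ m * ?p m) powr (1 / real m)) powr real k"
      by (simp add: powr_powr)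
    also have "\<dots> = (real n * ?M) powr real k" by (simp add: r1)
    also have "\<dots> = (real n * ?M) ^ k" using k c Mnn by (simp add: powr_realpow')
    finally show ?thesis by (simp add: power_mult_distrib)
  qed
  have sum_eq: "(\<Sum>k = 1..<m. (mat_trace (laplacian n E ^\<^sub>m k) - mat_trace (laplacian n E ^\<^sub>m m) powr (real k / real m)) / (real k * real n ^ k))
      = (\<Sum>k=1..<m. (?p k - ?M^k) / real k)"
  proof (intro sum.cong refl)
    fix k assume "k \<in> {1..<m}"
    then have k: "1 \<le> k" by simp
    show "(mat_trace (laplacian n E ^\<^sub>m k) - mat_trace (laplacian n E ^\<^sub>m m) powr (real k / real m)) / (real k * real n ^ k)
        = (?p k - ?M^k) / real k"
      unfolding trp rk[OF k] using c k by (simp add: field_simps)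
  qed
  have first: "1 - mat_trace (laplacian n E ^\<^sub>m m) powr (1 / real m) / real n = 1 - ?M"
    unfolding trp r1 using c by simp
  show ?thesis unfolding tree_bound_def Let_def sum_eq first by simp
qed

lemma lap_dd:
  assumes sg: "simple_graph n E" and i: "i < n"
  shows "(\<Sum>j\<in>{..<n}-{i}. \<bar>laplacian n E $$ (i,j)\<bar>) \<le> laplacian n E $$ (i,i)"
proof -
  have nE: "\<not> E i i" using sg i unfolding simple_graph_def by blast
  have "(\<Sum>j\<in>{..<n}-{i}. \<bar>laplacian n E $$ (i,j)\<bar>) = (\<Sum>j\<in>{..<n}-{i}. if E i j then 1 else 0)"
    by (intro sum.cong refl) (use i in \<open>auto simp: lap_entry\<close>)
  also have "\<dots> = (\<Sum>j\<in>{..<n}. if E i j then 1 else 0)"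
    by (rule sum.mono_neutral_left) (use nE in auto)
  also have "\<dots> = (\<Sum>j\<in>{j\<in>{..<n}. E i j}. 1)" by (rule sum.inter_filter[symmetric]) simp
  also have "\<dots> = real (degree n E i)" unfolding degree_def by (simp add: Collect_conj_eq Int_commute lessThan_def)
  also have "\<dots> = laplacian n E $$ (i,i)" using i nE by (simp add: lap_entry)
  finally show ?thesis by simp
qed

theorem theorem2:
  fixes n m :: nat and E :: "nat \<Rightarrow> nat \<Rightarrow> bool"
  assumes "simple_graph n E"
    and "regular_graph n E"
    and "m \<ge> 2"
    and "mat_trace (laplacian n E ^\<^sub>m m) < real n ^ m"
  shows "real (num_spanning_trees n (complement_graph E)) \<ge> tree_bound n E m
     \<and> (tree_bound n E \<longlonglongrightarrow> real (num_spanning_trees n (complement_graph E)))"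
proof -
  note sg = assms(1) and m2 = assms(3) and trm = assms(4)
  let ?L = "laplacian n E"
  let ?t = "real (num_spanning_trees n (complement_graph E))"
  have Lc: "?L \<in> carrier_mat n n"
    unfolding laplacian_def degree_mat_def adjacency_mat_def by (rule minus_carrier_mat) simp
  have n: "1 \<le> n"
  proof (rule ccontr)
    assume "\<not> 1 \<le> n" then have "n = 0" by simp
    then have "mat_trace (?L ^\<^sub>m m) = 0" unfolding mat_trace_def using Lc by simp
    moreover have "real n ^ m = 0" using \<open>n = 0\<close> m2 by simp
    ultimately show False using trm by simp
  qed
  have c: "0 < real n" using n by simp
  obtain es where len: "length es = n" and nn: "\<forall>e\<in>set es. 0 \<le> e"
    and trE: "\<And>k. gtr (?L ^\<^sub>m k) = (\<Sum>e\<leftarrow>es. e^k)"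
    and detE: "\<And>c. det (c \<cdot>\<^sub>m 1\<^sub>m n - ?L) = (\<Prod>e\<leftarrow>es. c - e)"
    using spectral[OF Lc lap_sym[OF sg] lap_dd[OF sg]] by blast
  have tr: "mat_trace (?L ^\<^sub>m k) = (\<Sum>e\<leftarrow>es. e^k)" for k
    using trE[of k] unfolding gtr_def mat_trace_def .
  let ?xs = "map (\<lambda>e. e / real n) es"
  have xs01: "\<forall>x\<in>set ?xs. 0 \<le> x \<and> x < 1"
  proof
    fix x assume "x \<in> set ?xs"
    then obtain e where e: "e \<in> set es" "x = e / real n" by auto
    have e0: "0 \<le> e" using nn e by auto
    have "e^m \<le> psum es m" by (rule mem_le_psum[OF nn e(1)])
    also have "\<dots> < real n ^ m" using trm tr unfolding psum_def by simp
    finally have "e < real n" using power_less_imp_less_base[of e m "real n"] c by simp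
    then show "0 \<le> x \<and> x < 1" using e e0 c by simp
  qed
  have xs0: "\<forall>x\<in>set ?xs. 0 \<le> x" using xs01 by blast
  have tval: "?t = real n ^ (n - 2) * (\<Prod>x\<leftarrow>?xs. 1 - x)"
  proof -
    have "real n ^ 2 * ?t = det (real n \<cdot>\<^sub>m 1\<^sub>m n - ?L)" using tree_count_compl[OF sg n] by simp
    also have "\<dots> = real n ^ n * (\<Prod>x\<leftarrow>?xs. 1 - x)" using detE prod_scale[OF c, of es] len by simp
    also have "real n ^ n = real n ^ 2 * real n ^ (n - 2)"
    proof (cases "n = 1")
      case True then show ?thesis by simp
    next
      case False then have "n = 2 + (n - 2)" using n by simp
      then show ?thesis by (metis power_add)
    qed
    finally show ?thesis using c by simp
  qed
  have tb: "tree_bound n E k = real n ^ (n - 2) *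
     ((1 - psum ?xs k powr (1 / real k)) *
      exp (- (\<Sum>j=1..<k. (psum ?xs j - (psum ?xs k powr (1 / real k))^j) / real j)))" if k: "1 \<le> k" for k
    by (rule tb_formula[OF n k tr nn])
  show ?thesis
  proof
    let ?M = "psum ?xs m powr (1 / real m)"
    have m0: "0 < m" using m2 by simp
    have pm: "psum ?xs m = ?M ^ m" using powr_root_pow[OF psum_nonneg[OF xs0] m0] by simp
    have xM: "\<forall>x\<in>set ?xs. x \<le> ?M"
    proof
      fix x assume x: "x \<in> set ?xs"
      have "x^m \<le> ?M^m" using mem_le_psum[OF xs0 x, of m] pm by simp
      then show "x \<le> ?M" using power_le_imp_le_base[of x "m - 1" ?M] m0 by simp
    qed
    have "(1 - ?M) * exp (- (\<Sum>k=1..<m. (psum ?xs k - ?M^k) / real k)) \<le> (\<Prod>x\<leftarrow>?xs. 1 - x)"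
      by (rule main_ineq[OF xs01 _ xM pm]) simp
    then have "real n ^ (n - 2) * ((1 - ?M) * exp (- (\<Sum>k=1..<m. (psum ?xs k - ?M^k) / real k)))
        \<le> real n ^ (n - 2) * (\<Prod>x\<leftarrow>?xs. 1 - x)"
      by (rule mult_left_mono) simp
    moreover have "tree_bound n E m = real n ^ (n - 2) * ((1 - ?M) * exp (- (\<Sum>k=1..<m. (psum ?xs k - ?M^k) / real k)))"
      by (rule tb) (use m2 in simp)
    ultimately show "tree_bound n E m \<le> ?t" unfolding tval by simp
  next
    have lim: "(\<lambda>k. real n ^ (n - 2) * ((1 - psum ?xs k powr (1/real k)) *
      exp (- (\<Sum>j=1..<k. (psum ?xs j - (psum ?xs k powr (1/real k))^j) / real j))))
      \<longlonglongrightarrow> real n ^ (n - 2) * (\<Prod>x\<leftarrow>?xs. 1 - x)"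
      by (intro tendsto_mult tendsto_const main_lim[OF xs01])
    show "tree_bound n E \<longlonglongrightarrow> ?t" unfolding tval
    proof (rule Lim_transform_eventually[OF lim])
      show "eventually (\<lambda>k. real n ^ (n - 2) * ((1 - psum ?xs k powr (1/real k)) *
        exp (- (\<Sum>j=1..<k. (psum ?xs j - (psum ?xs k powr (1/real k))^j) / real j))) = tree_bound n E k) sequentially"
        using eventually_ge_at_top[of 1] by eventually_elim (simp add: tb)
    qed
  qed
qed

end
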